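(* Let $p$ be an odd prime, $0<\alpha\le 1$, and $\beta<\alpha^3$. Put $\gamma=\alpha^3+(\alpha^3-\beta)/2$, and, if additionally $\alpha^3>2^{8+8C_p}\beta$, one may instead put $\gamma=(\alpha^3/\beta)^{1/(2C_p)}\alpha^3$. Then $\gamma>\alpha^3$, and for each $\delta>0$ there is $n'=n'_p(\alpha,\beta,\delta)$ such that if $n>n'$ and $f:\mathbb{F}_p^n\to[0,1]$ has $\mathbb{E}[f]=\alpha$ and $\mathbb{E}_{x,d\in\mathbb{F}_p^n}[f(x)f(x+d)f(x+2d)]\le\beta$, then there is a nonzero $d\in\mathbb{F}_p^n$ with $\mathbb{E}_{x}[f(x)f(x+d)f(x+2d)]\ge\gamma-\delta$.
   Context: $C_p\ge1$ is a constant depending only on $p$ (with $C_p=\Theta(\log p)$) such that for every $m\ge1$ and every $X\subseteq\mathbb{F}_p^m$ with $|X|=xp^m$, the number of pairs $(a,d)\in(\mathbb{F}_p^m)^2$ with $a,a+d,a+2d\in X$ is at least $x^{C_p}p^{2m}$. *)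

theory Defs
  imports Complex_Main "HOL-Library.FuncSet" "HOL-Computational_Algebra.Primes"
begin

text \<open>The vector space F_p^n, represented as functions {..<n} -> {..<p}
  (extensional, i.e. undefined outside {..<n}), with coordinatewise addition mod p.\<close>

definition Fpn :: "nat \<Rightarrow> nat \<Rightarrow> (nat \<Rightarrow> nat) set" where
  "Fpn p n = PiE {..<n} (\<lambda>_. {..<p})"

definition vadd :: "nat \<Rightarrow> nat \<Rightarrow> (nat \<Rightarrow> nat) \<Rightarrow> (nat \<Rightarrow> nat) \<Rightarrow> (nat \<Rightarrow> nat)" where
  "vadd p n x y = (\<lambda>i\<in>{..<n}. (x i + y i) mod p)"

definition vzero :: "nat \<Rightarrow> (nat \<Rightarrow> nat)" where
  "vzero n = (\<lambda>i\<in>{..<n}. 0)"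

definition avg :: "'a set \<Rightarrow> ('a \<Rightarrow> real) \<Rightarrow> real" where
  "avg A g = (\<Sum>x\<in>A. g x) / real (card A)"

definition AP_constant :: "nat \<Rightarrow> real \<Rightarrow> bool" where
  "AP_constant p C \<longleftrightarrow> C \<ge> 1 \<and>
     (\<forall>m\<ge>1. \<forall>X \<subseteq> Fpn p m.
        real (card {(a, d) \<in> Fpn p m \<times> Fpn p m.
                    a \<in> X \<and> vadd p m a d \<in> X \<and> vadd p m (vadd p m a d) d \<in> X})
        \<ge> (real (card X) / real p ^ m) powr C * real p ^ (2 * m))"

definition increment_conclusion :: "nat \<Rightarrow> real \<Rightarrow> real \<Rightarrow> real \<Rightarrow> bool" where
  "increment_conclusion p \<alpha> \<beta> \<gamma> \<longleftrightarrow> \<gamma> > \<alpha> ^ 3 \<and>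
     (\<forall>\<delta>>0. \<exists>n'. \<forall>n>n'. \<forall>f :: (nat \<Rightarrow> nat) \<Rightarrow> real.
        (\<forall>x\<in>Fpn p n. 0 \<le> f x \<and> f x \<le> 1) \<and>
        avg (Fpn p n) f = \<alpha> \<and>
        avg (Fpn p n \<times> Fpn p n)
          (\<lambda>(x, d). f x * f (vadd p n x d) * f (vadd p n (vadd p n x d) d)) \<le> \<beta>
        \<longrightarrow> (\<exists>d\<in>Fpn p n. d \<noteq> vzero n \<and>
              avg (Fpn p n) (\<lambda>x. f x * f (vadd p n x d) * f (vadd p n (vadd p n x d) d))
                \<ge> \<gamma> - \<delta>))"

end

theory Submission
  imports Defs
begin


locale fgrp =
  fixes G :: "'a set" and add :: "'a \<Rightarrow> 'a \<Rightarrow> 'a" and zero :: 'a and neg :: "'a \<Rightarrow> 'a"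
    and chi :: "'a \<Rightarrow> 'a \<Rightarrow> complex" and p :: nat
  assumes fin: "finite G" and zero_in: "zero \<in> G"
    and add_in: "x\<in>G \<Longrightarrow> y\<in>G \<Longrightarrow> add x y \<in> G"
    and neg_in: "x\<in>G \<Longrightarrow> neg x \<in> G"
    and assoc: "x\<in>G \<Longrightarrow> y\<in>G \<Longrightarrow> z\<in>G \<Longrightarrow> add (add x y) z = add x (add y z)"
    and comm: "x\<in>G \<Longrightarrow> y\<in>G \<Longrightarrow> add x y = add y x"
    and zero_l: "x\<in>G \<Longrightarrow> add zero x = x"
    and neg_r: "x\<in>G \<Longrightarrow> add x (neg x) = zero"
    and p_pos: "p > 1"
    and mul_p: "x\<in>G \<Longrightarrow> (add x ^^ p) zero = zero"
    and dbl: "bij_betw (\<lambda>x. add x x) G G"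
    and chi_add: "r\<in>G \<Longrightarrow> x\<in>G \<Longrightarrow> y\<in>G \<Longrightarrow> chi r (add x y) = chi r x * chi r y"
    and chi_sym: "r\<in>G \<Longrightarrow> x\<in>G \<Longrightarrow> chi r x = chi x r"
    and chi_norm: "r\<in>G \<Longrightarrow> x\<in>G \<Longrightarrow> cmod (chi r x) = 1"
    and chi_sum: "r\<in>G \<Longrightarrow> r \<noteq> zero \<Longrightarrow> (\<Sum>x\<in>G. chi r x) = 0"
begin

lemma zero_r: "x\<in>G \<Longrightarrow> add x zero = x"
  using comm zero_l zero_in by metis

lemma neg_l: "x\<in>G \<Longrightarrow> add (neg x) x = zero"
  using comm neg_r neg_in by metis

lemma cancel_l: assumes "a\<in>G" "x\<in>G" "y\<in>G" "add a x = add a y" shows "x = y"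
proof -
  have e: "add (neg a) (add a z) = z" if "z\<in>G" for z
    using assoc[of "neg a" a z] assms that neg_in neg_l zero_l by simp
  have "add (neg a) (add a x) = add (neg a) (add a y)" using assms by simp
  then show ?thesis using e assms by metis
qed

lemma trans_bij: "a\<in>G \<Longrightarrow> bij_betw (add a) G G"
  unfolding bij_betw_def inj_on_def
proof safe
  fix x y assume "a\<in>G" "x\<in>G" "y\<in>G" "add a x = add a y" then show "x = y" using cancel_l by blast
next
  fix x assume "a\<in>G" "x\<in>G" then show "add a x \<in> G" by (rule add_in)
next
  fix x assume a: "a\<in>G" "x\<in>G"
  then have "add a (add (neg a) x) = x" by (simp add: assoc[symmetric] neg_in neg_r zero_l)
  then show "x \<in> add a ` G" using a neg_in add_in by (metis image_eqI)
qed

lemma sum_trans: "a\<in>G \<Longrightarrow> (\<Sum>x\<in>G. g (add a x)) = (\<Sum>x\<in>G. g x)"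
  using sum.reindex_bij_betw[OF trans_bij] by blast

lemma sum_trans': assumes "a\<in>G" shows "(\<Sum>x\<in>G. g (add x a)) = (\<Sum>x\<in>G. g x)"
proof -
  have "(\<Sum>x\<in>G. g (add x a)) = (\<Sum>x\<in>G. g (add a x))"
  proof (rule sum.cong)
    fix x assume "x\<in>G" then show "g (add x a) = g (add a x)" using comm[of x a] assms by simp
  qed simp
  then show ?thesis using sum_trans[OF assms] by simp
qed

lemma sum_dbl: "(\<Sum>x\<in>G. g (add x x)) = (\<Sum>x\<in>G. g x)"
  using sum.reindex_bij_betw[OF dbl] by blast

lemma chi_zero_r: "r\<in>G \<Longrightarrow> chi r zero = 1"
proof -
  assume r: "r\<in>G"
  have "chi r zero = chi r zero * chi r zero" using chi_add[OF r zero_in zero_in] zero_l zero_in by simp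
  moreover have "chi r zero \<noteq> 0" using chi_norm[OF r zero_in] by auto
  ultimately show ?thesis by (metis mult_cancel_left2)
qed

lemma chi_zero_l: "x\<in>G \<Longrightarrow> chi zero x = 1"
  using chi_sym chi_zero_r zero_in by metis

lemma chi_add_l: assumes "r\<in>G" "s\<in>G" "x\<in>G" shows "chi (add r s) x = chi r x * chi s x"
proof -
  have "chi (add r s) x = chi x (add r s)" using chi_sym assms add_in by simp
  also have "\<dots> = chi x r * chi x s" using chi_add assms by simp
  also have "\<dots> = chi r x * chi s x" using chi_sym assms by simp
  finally show ?thesis .
qed

lemma chi_neg: assumes "r\<in>G" "x\<in>G" shows "cnj (chi r x) = chi r (neg x)"
proof -
  have "chi r x * chi r (neg x) = 1" using chi_add[OF assms(1) assms(2) neg_in[OF assms(2)]] neg_r assms chi_zero_r by simp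
  moreover have "chi r x * cnj (chi r x) = 1" using chi_norm[OF assms] by (metis complex_norm_square of_real_1 power_one)
  ultimately have A: "chi r x * chi r (neg x) = 1" and B: "chi r x * cnj (chi r x) = 1" by auto
  have "cnj (chi r x) = cnj (chi r x) * (chi r x * chi r (neg x))" by (simp add: A)
  also have "\<dots> = (chi r x * cnj (chi r x)) * chi r (neg x)" by (simp add: mult_ac)
  also have "\<dots> = chi r (neg x)" by (simp add: B)
  finally show ?thesis .
qed

lemma chi_neg_l: assumes "r\<in>G" "x\<in>G" shows "cnj (chi r x) = chi (neg r) x"
  using chi_neg chi_sym assms neg_in by metis

lemma orth: assumes "r\<in>G" "s\<in>G"
  shows "(\<Sum>x\<in>G. chi r x * cnj (chi s x)) = (if r = s then of_nat (card G) else 0)"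
proof -
  have "(\<Sum>x\<in>G. chi r x * cnj (chi s x)) = (\<Sum>x\<in>G. chi (add r (neg s)) x)"
    using assms by (intro sum.cong) (auto simp: chi_neg_l chi_add_l neg_in)
  also have "\<dots> = (if r = s then of_nat (card G) else 0)"
  proof (cases "r = s")
    case True then show ?thesis using assms by (simp add: neg_r chi_zero_l)
  next
    case False
    have "add r (neg s) \<noteq> zero"
    proof
      assume "add r (neg s) = zero"
      then have "add (add r (neg s)) s = s" using assms zero_l by simp
      then have "r = s" using assms by (simp add: assoc neg_in neg_l zero_r)
      then show False using False by simp
    qed
    then show ?thesis using False chi_sum assms add_in neg_in by simp
  qed
  finally show ?thesis .
qed

lemma N_pos: "card G > 0" using fin zero_in card_gt_0_iff by blast

definition F :: "('a \<Rightarrow> complex) \<Rightarrow> 'a \<Rightarrow> complex" where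
  "F g r = (\<Sum>x\<in>G. g x * cnj (chi r x)) / of_nat (card G)"

lemma inv_term: assumes "x\<in>G" "r\<in>G"
  shows "F g r * chi r x = (\<Sum>y\<in>G. g y * (chi x r * cnj (chi y r))) / of_nat (card G)"
proof -
  have "F g r * chi r x = (\<Sum>y\<in>G. g y * cnj (chi r y) * chi r x) / of_nat (card G)"
    unfolding F_def by (simp add: sum_distrib_right)
  also have "\<dots> = (\<Sum>y\<in>G. g y * (chi x r * cnj (chi y r))) / of_nat (card G)"
  proof -
    have "g y * cnj (chi r y) * chi r x = g y * (chi x r * cnj (chi y r))" if "y\<in>G" for y
      using that assms chi_sym by (metis mult.commute mult.left_commute)
    then show ?thesis by (metis (no_types, lifting) sum.cong)
  qed
  finally show ?thesis .
qed

lemma inversion: assumes "x\<in>G" shows "(\<Sum>r\<in>G. F g r * chi r x) = g x"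
proof -
  have "(\<Sum>r\<in>G. F g r * chi r x) = (\<Sum>r\<in>G. (\<Sum>y\<in>G. g y * (chi x r * cnj (chi y r))) / of_nat (card G))"
    using inv_term[OF assms] by (metis (no_types, lifting) sum.cong)
  also have "\<dots> = (\<Sum>r\<in>G. \<Sum>y\<in>G. g y * (chi x r * cnj (chi y r))) / of_nat (card G)"
    by (simp only: sum_divide_distrib)
  also have "\<dots> = (\<Sum>y\<in>G. g y * (\<Sum>r\<in>G. chi x r * cnj (chi y r))) / of_nat (card G)"
    by (subst sum.swap) (simp add: sum_distrib_left)
  also have "\<dots> = (\<Sum>y\<in>G. if x = y then g y * of_nat (card G) else 0) / of_nat (card G)"
    using assms by (intro arg_cong2[where f="(/)"] sum.cong refl) (simp add: orth)
  also have "\<dots> = g x" using assms fin N_pos by auto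
  finally show ?thesis .
qed

lemma parseval: "(\<Sum>r\<in>G. (cmod (F g r))^2) = (\<Sum>x\<in>G. (cmod (g x))^2) / real (card G)"
proof -
  have "complex_of_real (\<Sum>r\<in>G. (cmod (F g r))^2) = (\<Sum>r\<in>G. complex_of_real ((cmod (F g r))^2))"
    by (simp only: of_real_sum)
  also have "\<dots> = (\<Sum>r\<in>G. F g r * cnj (F g r))"
    by (simp only: complex_norm_square)
  also have "\<dots> = (\<Sum>r\<in>G. \<Sum>x\<in>G. cnj (g x) * (F g r * chi r x)) / of_nat (card G)"
    unfolding F_def[of g] by (simp add: sum_divide_distrib sum_distrib_left mult_ac)
  also have "\<dots> = (\<Sum>x\<in>G. cnj (g x) * (\<Sum>r\<in>G. F g r * chi r x)) / of_nat (card G)"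
    by (subst sum.swap) (simp add: sum_distrib_left)
  also have "\<dots> = (\<Sum>x\<in>G. cnj (g x) * g x) / of_nat (card G)"
    by (simp add: inversion)
  also have "\<dots> = (\<Sum>x\<in>G. g x * cnj (g x)) / of_nat (card G)"
    by (simp only: mult.commute)
  also have "\<dots> = (\<Sum>x\<in>G. complex_of_real ((cmod (g x))^2)) / of_nat (card G)"
    by (simp only: complex_norm_square)
  also have "\<dots> = complex_of_real ((\<Sum>x\<in>G. (cmod (g x))^2) / real (card G))"
    by (simp only: of_real_sum of_real_divide of_real_of_nat_eq)
  finally show ?thesis using of_real_eq_iff by blast
qed

end


context fgrp
begin

lemma add4: "a\<in>G \<Longrightarrow> b\<in>G \<Longrightarrow> c\<in>G \<Longrightarrow> d\<in>G \<Longrightarrow> add (add a b) (add c d) = add (add a c) (add b d)"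
proof -
  assume h: "a\<in>G" "b\<in>G" "c\<in>G" "d\<in>G"
  have "add (add a b) (add c d) = add a (add b (add c d))" using h by (simp add: assoc add_in)
  also have "add b (add c d) = add c (add b d)"
  proof -
    have "add b (add c d) = add (add b c) d" using h by (simp add: assoc)
    also have "add b c = add c b" using h comm by simp
    also have "add (add c b) d = add c (add b d)" using h by (simp add: assoc)
    finally show ?thesis .
  qed
  also have "add a (add c (add b d)) = add (add a c) (add b d)" using h by (simp add: assoc add_in)
  finally show ?thesis .
qed

lemma neg_unique: "a\<in>G \<Longrightarrow> b\<in>G \<Longrightarrow> add a b = zero \<Longrightarrow> b = neg a"
  using cancel_l[of a b "neg a"] neg_r neg_in by simp

lemma neg_neg: "a\<in>G \<Longrightarrow> neg (neg a) = a"
  using neg_unique[of "neg a" a] neg_l neg_in by simp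

lemma neg_zero: "neg zero = zero"
  using neg_unique[of zero zero] zero_in zero_l by simp

lemma neg_add: "a\<in>G \<Longrightarrow> b\<in>G \<Longrightarrow> neg (add a b) = add (neg a) (neg b)"
proof -
  assume h: "a\<in>G" "b\<in>G"
  have "add (add a b) (add (neg a) (neg b)) = add (add a (neg a)) (add b (neg b))"
    using h add4 neg_in by simp
  also have "\<dots> = zero" using h by (simp add: neg_r zero_l zero_in)
  finally show ?thesis using neg_unique[of "add a b" "add (neg a) (neg b)"] h add_in neg_in by simp
qed

definition mulk :: "nat \<Rightarrow> 'a \<Rightarrow> 'a" where "mulk k x = (add x ^^ k) zero"

lemma mulk_0[simp]: "mulk 0 x = zero" by (simp add: mulk_def)
lemma mulk_Suc: "mulk (Suc k) x = add x (mulk k x)" by (simp add: mulk_def)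

lemma mulk_in: "x\<in>G \<Longrightarrow> mulk k x \<in> G"
  by (induction k) (auto simp: mulk_Suc zero_in add_in)

lemma mulk_plus: "x\<in>G \<Longrightarrow> mulk (a+b) x = add (mulk a x) (mulk b x)"
proof (induction a)
  case 0 then show ?case by (simp add: zero_l mulk_in)
next
  case (Suc a) then show ?case by (simp add: mulk_Suc assoc mulk_in)
qed

lemma mulk_p_mult: "x\<in>G \<Longrightarrow> mulk (q*p) x = zero"
proof (induction q)
  case 0 then show ?case by simp
next
  case (Suc q)
  have "mulk (Suc q * p) x = add (mulk p x) (mulk (q*p) x)" using Suc mulk_plus by (simp add: add.commute)
  then show ?case using Suc mul_p by (simp add: mulk_def zero_l zero_in)
qed

lemma mulk_mod: assumes "x\<in>G" shows "mulk k x = mulk (k mod p) x"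
proof -
  have "mulk k x = mulk ((k div p) * p + k mod p) x" by simp
  also have "\<dots> = mulk (k mod p) x" using assms by (simp only: mulk_plus mulk_p_mult zero_l mulk_in)
  finally show ?thesis .
qed

lemma chi_mulk: "r\<in>G \<Longrightarrow> x\<in>G \<Longrightarrow> chi (mulk k x) r = chi x r ^ k"
  by (induction k) (simp_all add: mulk_Suc chi_add_l mulk_in chi_zero_l)

fun span :: "'a list \<Rightarrow> 'a set" where
  "span [] = {zero}"
| "span (l#L) = (\<lambda>(y,k). add y (mulk k l)) ` (span L \<times> {..<p})"

lemma span_ConsI: "y \<in> span L \<Longrightarrow> k < p \<Longrightarrow> add y (mulk k l) \<in> span (l#L)"
  unfolding span.simps by (rule image_eqI[where x="(y,k)"]) auto

lemma span_sub: "set L \<subseteq> G \<Longrightarrow> span L \<subseteq> G"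
  by (induction L) (auto simp: zero_in add_in mulk_in)

lemma finite_span: "finite (span L)"
  by (induction L) auto

lemma zero_span: "zero \<in> span L"
proof (induction L)
  case Nil then show ?case by simp
next
  case (Cons l L)
  show ?case using span_ConsI[OF Cons, of 0 l] p_pos by (simp add: zero_l zero_in)
qed

lemma span_add: "set L \<subseteq> G \<Longrightarrow> u \<in> span L \<Longrightarrow> v \<in> span L \<Longrightarrow> add u v \<in> span L"
proof (induction L arbitrary: u v)
  case Nil then show ?case by (simp add: zero_l zero_in)
next
  case (Cons l L)
  then obtain y1 k1 y2 k2 where u: "u = add y1 (mulk k1 l)" "y1\<in>span L" and v: "v = add y2 (mulk k2 l)" "y2 \<in> span L"
    by auto
  have lG: "l\<in>G" "set L \<subseteq> G" using Cons by auto
  have yG: "y1\<in>G" "y2\<in>G" using u v span_sub lG by auto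
  have "add u v = add (add y1 y2) (add (mulk k1 l) (mulk k2 l))"
    using u v add4[of y1 "mulk k1 l" y2 "mulk k2 l"] yG lG mulk_in by simp
  also have "\<dots> = add (add y1 y2) (mulk ((k1+k2) mod p) l)"
    using lG mulk_plus[of l k1 k2] mulk_mod[of l "k1+k2"] by simp
  finally have e: "add u v = add (add y1 y2) (mulk ((k1+k2) mod p) l)" by simp
  moreover have "add y1 y2 \<in> span L" using Cons.IH lG u v by simp
  moreover have "(k1+k2) mod p < p" using p_pos by simp
  ultimately show ?case using span_ConsI by simp
qed

lemma span_Cons_sup: "set (l#L) \<subseteq> G \<Longrightarrow> span L \<subseteq> span (l#L)"
proof
  fix y assume h: "set (l#L) \<subseteq> G" "y \<in> span L"
  have "y = add y (mulk 0 l)" using h span_sub[of L] by (auto simp: zero_r)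
  then show "y \<in> span (l#L)" using h p_pos span_ConsI[of y L 0 l] by simp
qed

lemma span_append_sup: "set (S@L) \<subseteq> G \<Longrightarrow> span L \<subseteq> span (S@L)"
  by (induction S) (use span_Cons_sup in fastforce)+

lemma head_span: "l\<in>G \<Longrightarrow> l \<in> span (l#L)"
proof -
  assume l: "l\<in>G"
  have "l = add zero (mulk 1 l)" using l by (simp add: mulk_Suc zero_l zero_r zero_in)
  then show ?thesis using zero_span p_pos span_ConsI[of zero L 1 l] by simp
qed

lemma set_span: "set L \<subseteq> G \<Longrightarrow> set L \<subseteq> span L"
proof (induction L)
  case Nil then show ?case by simp
next
  case (Cons l L) then show ?case using head_span span_Cons_sup by fastforce
qed

lemma card_span: "card (span L) \<le> p ^ length L"
proof (induction L)
  case Nil then show ?case by simp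
next
  case (Cons l L)
  have "card (span (l#L)) \<le> card (span L \<times> {..<p})"
    unfolding span.simps by (rule card_image_le) (simp add: finite_span)
  also have "\<dots> = card (span L) * p" by (simp add: card_cartesian_product)
  also have "\<dots> \<le> p ^ length L * p" using Cons by simp
  finally show ?case by (simp add: mult.commute)
qed

definition Ann :: "'a list \<Rightarrow> 'a set" where
  "Ann L = {x\<in>G. \<forall>l\<in>set L. chi l x = 1}"

lemma Ann_sub: "Ann L \<subseteq> G" by (auto simp: Ann_def)

lemma chi_span_Ann: "set L \<subseteq> G \<Longrightarrow> u \<in> span L \<Longrightarrow> x \<in> Ann L \<Longrightarrow> chi u x = 1"
proof (induction L arbitrary: u)
  case Nil then show ?case by (simp add: chi_zero_l Ann_def)
next
  case (Cons l L)
  then obtain y k where u: "u = add y (mulk k l)" "y\<in>span L" by auto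
  have lG: "l\<in>G" "set L \<subseteq> G" using Cons by auto
  have xA: "x \<in> Ann L" "chi l x = 1" "x\<in>G" using Cons by (auto simp: Ann_def)
  have "chi u x = chi y x * chi (mulk k l) x"
    using u chi_add_l[of y "mulk k l" x] span_sub[OF lG(2)] lG xA mulk_in by auto
  also have "chi (mulk k l) x = chi l x ^ k" using chi_mulk lG xA by simp
  finally show ?case using Cons.IH lG u xA by simp
qed

lemma zero_Ann: "set L \<subseteq> G \<Longrightarrow> zero \<in> Ann L" by (auto simp: Ann_def zero_in chi_zero_r)

lemma Ann_add: "x\<in>Ann L \<Longrightarrow> y\<in>Ann L \<Longrightarrow> set L \<subseteq> G \<Longrightarrow> add x y \<in> Ann L"
  by (auto simp: Ann_def add_in chi_add)

lemma Ann_neg: assumes "x\<in>Ann L" "set L \<subseteq> G" shows "neg x \<in> Ann L"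
proof -
  have "chi l (neg x) = 1" if "l \<in> set L" for l
    using that assms chi_neg[of l x, symmetric] by (auto simp: Ann_def)
  then show ?thesis using assms by (auto simp: Ann_def neg_in)
qed

lemma sum_span: assumes L: "set L \<subseteq> G" and x: "x\<in>G"
  shows "(\<Sum>u\<in>span L. chi u x) = (if x \<in> Ann L then of_nat (card (span L)) else 0)"
proof (cases "x \<in> Ann L")
  case True then show ?thesis using chi_span_Ann[OF L] by simp
next
  case False
  then obtain l where l: "l\<in>set L" "chi l x \<noteq> 1" using x by (auto simp: Ann_def)
  have lU: "l \<in> span L" and lG: "l\<in>G" using l set_span[OF L] L by auto
  have sub: "add l ` span L \<subseteq> span L" using span_add[OF L lU] by auto
  have inj: "inj_on (add l) (span L)" using cancel_l lG span_sub[OF L] by (meson inj_onI subsetD)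
  have eq: "add l ` span L = span L"
    using card_subset_eq[OF finite_span sub] card_image[OF inj] by simp
  have "(\<Sum>u\<in>span L. chi u x) = (\<Sum>u\<in>span L. chi (add l u) x)"
    using sum.reindex[OF inj, of "\<lambda>u. chi u x"] eq by simp
  also have "\<dots> = (\<Sum>u\<in>span L. chi l x * chi u x)"
  proof (rule sum.cong)
    fix u assume "u \<in> span L" then show "chi (add l u) x = chi l x * chi u x"
      using chi_add_l[of l u x] lG x span_sub[OF L] by auto
  qed simp
  also have "\<dots> = chi l x * (\<Sum>u\<in>span L. chi u x)" by (simp add: sum_distrib_left)
  finally have "(1 - chi l x) * (\<Sum>u\<in>span L. chi u x) = 0" by (simp add: algebra_simps)
  then show ?thesis using l False by simp
qed

lemma card_dual: assumes L: "set L \<subseteq> G" shows "card (span L) * card (Ann L) = card G"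
proof -
  have "(\<Sum>x\<in>G. \<Sum>u\<in>span L. chi u x) = (\<Sum>x\<in>G. if x \<in> Ann L then of_nat (card (span L)) else 0)"
    using sum_span[OF L] by simp
  also have "\<dots> = of_nat (card (span L)) * of_nat (card (Ann L))"
    using fin Ann_sub by (simp add: sum.If_cases Int_absorb1)
  finally have 1: "(\<Sum>x\<in>G. \<Sum>u\<in>span L. chi u x) = of_nat (card (span L) * card (Ann L))" by simp
  have "(\<Sum>x\<in>G. \<Sum>u\<in>span L. chi u x) = (\<Sum>u\<in>span L. \<Sum>x\<in>G. chi u x)" by (rule sum.swap)
  also have "\<dots> = (\<Sum>u\<in>span L. if u = zero then of_nat (card G) else 0)"
    using chi_sum span_sub[OF L] chi_zero_l by (intro sum.cong refl) auto
  also have "\<dots> = of_nat (card G)" using zero_span finite_span by simp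
  finally show ?thesis using 1 by (metis of_nat_eq_iff)
qed

end


lemma my_CS:
  fixes a b :: "'i \<Rightarrow> real"
  shows "(\<Sum>i\<in>I. a i * b i)\<^sup>2 \<le> (\<Sum>i\<in>I. (a i)\<^sup>2) * (\<Sum>i\<in>I. (b i)\<^sup>2)"
proof (cases "finite I")
  case fin: True
  show ?thesis
  proof (cases "(\<Sum>i\<in>I. (b i)\<^sup>2) = 0")
    case True
    then have "\<forall>i\<in>I. b i = 0" using sum_nonneg_eq_0_iff[OF fin, of "\<lambda>i. (b i)\<^sup>2"] by simp
    then show ?thesis by simp
  next
    case False
    define B where "B = (\<Sum>i\<in>I. (b i)\<^sup>2)"
    define S where "S = (\<Sum>i\<in>I. a i * b i)"
    have Bpos: "B > 0" using False B_def by (simp add: order_le_neq_trans sum_nonneg)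
    define r where "r = S / B"
    have "0 \<le> (\<Sum>i\<in>I. (a i - r * b i)\<^sup>2)" by (simp add: sum_nonneg)
    also have "\<dots> = (\<Sum>i\<in>I. (a i)\<^sup>2) - 2 * r * S + r\<^sup>2 * B"
      unfolding S_def B_def by (simp add: algebra_simps power2_eq_square sum_distrib_left flip: sum.distrib)
    also have "\<dots> = (\<Sum>i\<in>I. (a i)\<^sup>2) - S\<^sup>2 / B"
      using Bpos by (simp add: r_def power2_eq_square field_simps)
    finally have "S\<^sup>2 / B \<le> (\<Sum>i\<in>I. (a i)\<^sup>2)" by simp
    then have "S\<^sup>2 \<le> (\<Sum>i\<in>I. (a i)\<^sup>2) * B" using Bpos by (simp add: divide_le_eq)
    then show ?thesis unfolding S_def B_def .
  qed
qed simp

context fgrp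
begin

definition P :: "'a list \<Rightarrow> ('a \<Rightarrow> complex) \<Rightarrow> 'a \<Rightarrow> complex" where
  "P L g x = (\<Sum>u\<in>span L. F g u * chi u x)"

lemma F_P: assumes L: "set L \<subseteq> G" and r: "r\<in>G"
  shows "F (P L g) r = (if r \<in> span L then F g r else 0)"
proof -
  have "(\<Sum>x\<in>G. P L g x * cnj (chi r x)) = (\<Sum>x\<in>G. \<Sum>u\<in>span L. F g u * (chi u x * cnj (chi r x)))"
    unfolding P_def by (simp only: sum_distrib_right mult.assoc)
  also have "\<dots> = (\<Sum>u\<in>span L. \<Sum>x\<in>G. F g u * (chi u x * cnj (chi r x)))"
    by (rule sum.swap)
  also have "\<dots> = (\<Sum>u\<in>span L. F g u * (\<Sum>x\<in>G. chi u x * cnj (chi r x)))"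
    by (simp only: sum_distrib_left)
  also have "\<dots> = (\<Sum>u\<in>span L. if u = r then F g u * of_nat (card G) else 0)"
  proof (rule sum.cong)
    fix u assume "u \<in> span L"
    then show "F g u * (\<Sum>x\<in>G. chi u x * cnj (chi r x)) = (if u = r then F g u * of_nat (card G) else 0)"
      using span_sub[OF L] orth[of u r] r by auto
  qed simp
  also have "\<dots> = (if r \<in> span L then F g r * of_nat (card G) else 0)"
    using finite_span by (simp add: sum.delta')
  finally show ?thesis using N_pos by (simp add: F_def[of "P L g"])
qed

definition cset :: "'a list \<Rightarrow> 'a \<Rightarrow> 'a set" where
  "cset L x = {y\<in>G. add x (neg y) \<in> Ann L}"

lemma P_phys: assumes L: "set L \<subseteq> G" and x: "x\<in>G"
  shows "P L g x = (\<Sum>y\<in>cset L x. g y) / of_nat (card (Ann L))"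
proof -
  have cA: "card (Ann L) > 0" using card_dual[OF L] N_pos by (metis mult_is_0 neq0_conv)
  have "P L g x = (\<Sum>u\<in>span L. (\<Sum>y\<in>G. g y * cnj (chi u y)) * chi u x) / of_nat (card G)"
  proof -
    have "F g u * chi u x = (\<Sum>y\<in>G. g y * cnj (chi u y)) * chi u x / of_nat (card G)" for u
      by (simp add: F_def)
    then show ?thesis unfolding P_def by (simp add: sum_divide_distrib)
  qed
  also have "(\<Sum>u\<in>span L. (\<Sum>y\<in>G. g y * cnj (chi u y)) * chi u x) = (\<Sum>u\<in>span L. \<Sum>y\<in>G. g y * (cnj (chi u y) * chi u x))"
    by (simp only: sum_distrib_right mult.assoc)
  also have "\<dots> = (\<Sum>y\<in>G. \<Sum>u\<in>span L. g y * (cnj (chi u y) * chi u x))"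
    by (rule sum.swap)
  also have "\<dots> = (\<Sum>y\<in>G. if y \<in> cset L x then g y * of_nat (card (span L)) else 0)"
  proof (rule sum.cong)
    fix y assume y: "y\<in>G"
    have "(\<Sum>u\<in>span L. g y * (cnj (chi u y) * chi u x)) = g y * (\<Sum>u\<in>span L. chi u (add x (neg y)))"
    proof -
      have "cnj (chi u y) * chi u x = chi u (add x (neg y))" if "u\<in>span L" for u
        using that span_sub[OF L] x y chi_neg[of u y] chi_add[of u x "neg y"] neg_in by (auto simp: mult.commute)
      then show ?thesis by (simp add: sum_distrib_left)
    qed
    also have "\<dots> = (if y \<in> cset L x then g y * of_nat (card (span L)) else 0)"
      using sum_span[OF L, of "add x (neg y)"] x y add_in neg_in by (auto simp: cset_def)
    finally show "(\<Sum>u\<in>span L. g y * (cnj (chi u y) * chi u x)) = (if y \<in> cset L x then g y * of_nat (card (span L)) else 0)" .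
  qed simp
  also have "\<dots> = (\<Sum>y\<in>cset L x. g y * of_nat (card (span L)))"
  proof -
    have "cset L x = G \<inter> {y. y \<in> cset L x}" by (auto simp: cset_def)
    then show ?thesis using fin by (simp add: sum.If_cases)
  qed
  also have "\<dots> = (\<Sum>y\<in>cset L x. g y) * of_nat (card (span L))" by (simp add: sum_distrib_right)
  finally have "P L g x = (\<Sum>y\<in>cset L x. g y) * of_nat (card (span L)) / of_nat (card G)" .
  also have "\<dots> = (\<Sum>y\<in>cset L x. g y) / of_nat (card (Ann L))"
  proof -
    have e: "(of_nat (card G)::complex) = of_nat (card (span L)) * of_nat (card (Ann L))"
      using card_dual[OF L] by (metis of_nat_mult)
    have "(of_nat (card (span L))::complex) \<noteq> 0" using card_dual[OF L] N_pos by (metis mult_is_0 neq0_conv of_nat_eq_0_iff)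
    then show ?thesis using cA unfolding e by (simp add: field_simps)
  qed
  finally show ?thesis .
qed

lemma F_const1: assumes "u\<in>G" shows "F (\<lambda>_. 1) u = (if u = zero then 1 else 0)"
proof -
  have "F (\<lambda>_. 1) u = (\<Sum>x\<in>G. chi zero x * cnj (chi u x)) / of_nat (card G)"
    unfolding F_def by (simp add: chi_zero_l)
  then show ?thesis using orth[OF zero_in assms] N_pos by auto
qed

lemma P_const1: assumes L: "set L \<subseteq> G" and x: "x\<in>G" shows "P L (\<lambda>_. 1) x = 1"
proof -
  have "P L (\<lambda>_. 1) x = (\<Sum>u\<in>span L. if u = zero then 1 else 0)"
    unfolding P_def using F_const1 span_sub[OF L] x chi_zero_l by (intro sum.cong) auto
  then show ?thesis using zero_span finite_span by simp
qed

lemma card_cset: assumes L: "set L \<subseteq> G" and x: "x\<in>G" shows "card (cset L x) = card (Ann L)"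
proof -
  have cA: "card (Ann L) > 0" using card_dual[OF L] N_pos by (metis mult_is_0 neq0_conv)
  have "(1::complex) = of_nat (card (cset L x)) / of_nat (card (Ann L))"
    using P_phys[OF L x, of "\<lambda>_. 1"] P_const1[OF L x] by simp
  then show ?thesis using cA by (simp add: field_simps)
qed

lemma cset_sub: "cset L x \<subseteq> G" by (auto simp: cset_def)

lemma cset_shift: assumes L: "set L \<subseteq> G" and x: "x\<in>G" and d: "d \<in> Ann L"
  shows "cset L (add x d) = cset L x"
proof -
  have dG: "d\<in>G" using d Ann_sub by auto
  have "add (add x d) (neg y) \<in> Ann L \<longleftrightarrow> add x (neg y) \<in> Ann L" if y: "y\<in>G" for y
  proof -
    have ny: "neg y \<in> G" using y neg_in by simp
    have "add (add x d) (neg y) = add (add d x) (neg y)" using x dG comm by simp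
    also have "\<dots> = add d (add x (neg y))" using assoc x dG ny by simp
    finally have e: "add (add x d) (neg y) = add d (add x (neg y))" .
    have z: "add x (neg y) \<in> G" using x ny add_in by simp
    have "add (neg d) (add d (add x (neg y))) = add (add (neg d) d) (add x (neg y))"
      using assoc[of "neg d" d "add x (neg y)"] z dG neg_in by simp
    then have e2: "add (neg d) (add d (add x (neg y))) = add x (neg y)" using neg_l dG zero_l z by simp
    show ?thesis using e e2 Ann_add[OF d _ L] Ann_add[OF Ann_neg[OF d L] _ L] by metis
  qed
  then show ?thesis unfolding cset_def by auto
qed

lemma F_diff: "F (\<lambda>x. a x - b x) r = F a r - F b r"
  unfolding F_def by (simp add: algebra_simps sum_subtractf diff_divide_distrib)

lemma F_sum_zero: "F g zero = (\<Sum>x\<in>G. g x) / of_nat (card G)"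
  unfolding F_def using chi_zero_l by simp

end


context fgrp
begin

definition Pr :: "'a list \<Rightarrow> ('a \<Rightarrow> real) \<Rightarrow> 'a \<Rightarrow> real" where
  "Pr L f x = (\<Sum>y\<in>cset L x. f y) / real (card (Ann L))"

lemma cA_pos: "set L \<subseteq> G \<Longrightarrow> card (Ann L) > 0"
  using card_dual N_pos by (metis mult_is_0 neq0_conv)

lemma P_real: assumes L: "set L \<subseteq> G" and x: "x\<in>G"
  shows "P L (\<lambda>y. complex_of_real (f y)) x = complex_of_real (Pr L f x)"
  using P_phys[OF L x] by (simp add: Pr_def)

lemma Pr_bounds: assumes L: "set L \<subseteq> G" and x: "x\<in>G" and f: "\<And>y. y\<in>G \<Longrightarrow> 0 \<le> f y \<and> f y \<le> 1"
  shows "0 \<le> Pr L f x" "Pr L f x \<le> 1"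
proof -
  have s0: "0 \<le> (\<Sum>y\<in>cset L x. f y)" using f cset_sub by (meson subsetD sum_nonneg)
  have "(\<Sum>y\<in>cset L x. f y) \<le> (\<Sum>y\<in>cset L x. 1)" using f cset_sub by (meson subsetD sum_mono)
  also have "\<dots> = real (card (Ann L))" using card_cset[OF L x] by simp
  finally have s1: "(\<Sum>y\<in>cset L x. f y) \<le> real (card (Ann L))" .
  show "0 \<le> Pr L f x" using s0 by (simp add: Pr_def)
  show "Pr L f x \<le> 1" using s1 cA_pos[OF L] by (simp add: Pr_def divide_le_eq)
qed

lemma Pr_shift: assumes L: "set L \<subseteq> G" and x: "x\<in>G" and d: "d \<in> Ann L"
  shows "Pr L f (add x d) = Pr L f x"
  using cset_shift[OF L x d] by (simp add: Pr_def)

lemma F_cong: "(\<And>x. x\<in>G \<Longrightarrow> a x = b x) \<Longrightarrow> F a r = F b r"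
  unfolding F_def by (metis (no_types, lifting) sum.cong)

lemma Pr_sum: assumes L: "set L \<subseteq> G" shows "(\<Sum>x\<in>G. Pr L f x) = (\<Sum>x\<in>G. f x)"
proof -
  let ?f = "\<lambda>y. complex_of_real (f y)"
  have "F (P L ?f) zero = F ?f zero" using F_P[OF L zero_in] zero_span by simp
  moreover have "F (P L ?f) zero = F (\<lambda>y. complex_of_real (Pr L f y)) zero"
    using P_real[OF L] by (intro F_cong) simp
  ultimately have "(\<Sum>x\<in>G. complex_of_real (Pr L f x)) = (\<Sum>x\<in>G. complex_of_real (f x))"
    using N_pos by (simp add: F_sum_zero)
  then show ?thesis by (metis of_real_eq_iff of_real_sum)
qed

definition En :: "'a list \<Rightarrow> ('a \<Rightarrow> real) \<Rightarrow> real" where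
  "En L f = (\<Sum>u\<in>span L. (cmod (F (\<lambda>y. complex_of_real (f y)) u))\<^sup>2)"

lemma En_diff: assumes L: "set L \<subseteq> G" and L': "set L' \<subseteq> G" and sub: "span L \<subseteq> span L'"
  shows "(\<Sum>x\<in>G. (Pr L' f x - Pr L f x)\<^sup>2) / real (card G) = En L' f - En L f"
proof -
  let ?f = "\<lambda>y. complex_of_real (f y)"
  let ?g = "\<lambda>x. complex_of_real (Pr L' f x - Pr L f x)"
  have Fg: "F ?g r = (if r \<in> span L' - span L then F ?f r else 0)" if r: "r\<in>G" for r
  proof -
    have "F ?g r = F (\<lambda>x. P L' ?f x - P L ?f x) r"
      using P_real[OF L] P_real[OF L'] by (intro F_cong) simp
    also have "\<dots> = F (P L' ?f) r - F (P L ?f) r" by (rule F_diff)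
    also have "\<dots> = (if r \<in> span L' - span L then F ?f r else 0)"
      using F_P[OF L r] F_P[OF L' r] sub by auto
    finally show ?thesis .
  qed
  have "(cmod (?g x))\<^sup>2 = (Pr L' f x - Pr L f x)\<^sup>2" for x by (simp only: norm_of_real power2_abs)
  then have "(\<Sum>x\<in>G. (Pr L' f x - Pr L f x)\<^sup>2) / real (card G) = (\<Sum>x\<in>G. (cmod (?g x))\<^sup>2) / real (card G)"
    by simp
  also have "\<dots> = (\<Sum>r\<in>G. (cmod (F ?g r))\<^sup>2)" by (rule parseval[symmetric])
  also have "\<dots> = (\<Sum>r\<in>G. if r \<in> span L' - span L then (cmod (F ?f r))\<^sup>2 else 0)"
    using Fg by (intro sum.cong) auto
  also have "\<dots> = (\<Sum>r\<in>span L' - span L. (cmod (F ?f r))\<^sup>2)"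
  proof -
    have "span L' - span L = G \<inter> {r. r \<in> span L' - span L}" using span_sub[OF L'] by auto
    then show ?thesis using fin by (simp add: sum.If_cases)
  qed
  also have "\<dots> = En L' f - En L f"
    unfolding En_def using sum_diff[OF finite_span sub] by simp
  finally show ?thesis .
qed

lemma En_nonneg: "0 \<le> En L f" unfolding En_def by (simp add: sum_nonneg)

lemma En_le: assumes L: "set L \<subseteq> G" and f: "\<And>y. y\<in>G \<Longrightarrow> 0 \<le> f y \<and> f y \<le> 1"
  shows "En L f \<le> 1"
proof -
  let ?f = "\<lambda>y. complex_of_real (f y)"
  have "En L f \<le> (\<Sum>r\<in>G. (cmod (F ?f r))\<^sup>2)"
    unfolding En_def using span_sub[OF L] fin by (intro sum_mono2) auto
  also have "\<dots> = (\<Sum>x\<in>G. (cmod (?f x))\<^sup>2) / real (card G)" by (rule parseval)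
  also have "\<dots> \<le> (\<Sum>x\<in>G. 1) / real (card G)"
  proof -
    have "(cmod (?f x))\<^sup>2 \<le> 1" if "x\<in>G" for x using f[OF that] by (simp add: abs_square_le_1)
    then show ?thesis by (intro divide_right_mono sum_mono) auto
  qed
  also have "\<dots> = 1" using N_pos by simp
  finally show ?thesis .
qed

lemma L2_le1: assumes a: "\<And>x. x\<in>G \<Longrightarrow> cmod (a x) \<le> 1"
  shows "(\<Sum>r\<in>G. (cmod (F a r))\<^sup>2) \<le> 1"
proof -
  have "(\<Sum>r\<in>G. (cmod (F a r))\<^sup>2) = (\<Sum>x\<in>G. (cmod (a x))\<^sup>2) / real (card G)" by (rule parseval)
  also have "\<dots> \<le> (\<Sum>x\<in>G. 1) / real (card G)"
  proof -
    have "(cmod (a x))\<^sup>2 \<le> 1" if "x\<in>G" for x using a[OF that] by (simp add: power_le_one)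
    then show ?thesis by (intro divide_right_mono sum_mono) auto
  qed
  also have "\<dots> = 1" using N_pos by simp
  finally show ?thesis .
qed

end


lemma swap3: "(\<Sum>x\<in>A. \<Sum>d\<in>B. \<Sum>r\<in>C. g x d r) = (\<Sum>r\<in>C. \<Sum>x\<in>A. \<Sum>d\<in>B. g x d r)"
proof -
  have "(\<Sum>x\<in>A. \<Sum>d\<in>B. \<Sum>r\<in>C. g x d r) = (\<Sum>x\<in>A. \<Sum>r\<in>C. \<Sum>d\<in>B. g x d r)"
    by (rule sum.cong[OF refl], rule sum.swap)
  also have "\<dots> = (\<Sum>r\<in>C. \<Sum>x\<in>A. \<Sum>d\<in>B. g x d r)" by (rule sum.swap)
  finally show ?thesis .
qed

lemma swap5: "(\<Sum>x\<in>A. \<Sum>d\<in>B. \<Sum>r\<in>C. \<Sum>s\<in>D. \<Sum>t\<in>E. f x d r s t)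
   = (\<Sum>r\<in>C. \<Sum>s\<in>D. \<Sum>t\<in>E. \<Sum>x\<in>A. \<Sum>d\<in>B. f x d r s t)"
proof -
  have "(\<Sum>x\<in>A. \<Sum>d\<in>B. \<Sum>r\<in>C. \<Sum>s\<in>D. \<Sum>t\<in>E. f x d r s t)
      = (\<Sum>r\<in>C. \<Sum>x\<in>A. \<Sum>d\<in>B. \<Sum>s\<in>D. \<Sum>t\<in>E. f x d r s t)" by (rule swap3)
  also have "\<dots> = (\<Sum>r\<in>C. \<Sum>s\<in>D. \<Sum>x\<in>A. \<Sum>d\<in>B. \<Sum>t\<in>E. f x d r s t)"
    by (rule sum.cong[OF refl], rule swap3)
  also have "\<dots> = (\<Sum>r\<in>C. \<Sum>s\<in>D. \<Sum>t\<in>E. \<Sum>x\<in>A. \<Sum>d\<in>B. f x d r s t)"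
    by (rule sum.cong[OF refl], rule sum.cong[OF refl], rule swap3)
  finally show ?thesis .
qed

lemma prod3_sum:
  fixes k :: "'c::comm_semiring_1"
  shows "k * (\<Sum>r\<in>C. a r) * (\<Sum>s\<in>D. b s) * (\<Sum>t\<in>E. c t) = (\<Sum>r\<in>C. \<Sum>s\<in>D. \<Sum>t\<in>E. k * a r * b s * c t)"
proof -
  have 1: "k * (\<Sum>r\<in>C. a r) = (\<Sum>r\<in>C. k * a r)" by (rule sum_distrib_left)
  have 2: "(\<Sum>r\<in>C. k*a r) * (\<Sum>s\<in>D. b s) = (\<Sum>r\<in>C. \<Sum>s\<in>D. k*a r*b s)" by (rule sum_product)
  have 3: "(\<Sum>r\<in>C. \<Sum>s\<in>D. k*a r*b s) * (\<Sum>t\<in>E. c t) = (\<Sum>r\<in>C. (\<Sum>s\<in>D. k*a r*b s) * (\<Sum>t\<in>E. c t))"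
    by (rule sum_distrib_right)
  have 4: "(\<Sum>s\<in>D. k*a r*b s) * (\<Sum>t\<in>E. c t) = (\<Sum>s\<in>D. \<Sum>t\<in>E. k*a r*b s*c t)" for r by (rule sum_product)
  show ?thesis by (simp only: 1 2 3 4)
qed

lemma sum2_prod:
  fixes k :: "'c::comm_semiring_1"
  shows "(\<Sum>x\<in>A. \<Sum>d\<in>B. k * (f x * g d)) = k * ((\<Sum>x\<in>A. f x) * (\<Sum>d\<in>B. g d))"
proof -
  have 1: "(\<Sum>x\<in>A. f x) * (\<Sum>d\<in>B. g d) = (\<Sum>x\<in>A. \<Sum>d\<in>B. f x * g d)" by (rule sum_product)
  have 2: "k * (\<Sum>x\<in>A. \<Sum>d\<in>B. f x * g d) = (\<Sum>x\<in>A. k * (\<Sum>d\<in>B. f x * g d))" by (rule sum_distrib_left)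
  have 3: "k * (\<Sum>d\<in>B. f x * g d) = (\<Sum>d\<in>B. k * (f x * g d))" for x by (rule sum_distrib_left)
  show ?thesis by (simp only: 1 2 3)
qed

context fgrp
begin

definition T :: "'a \<Rightarrow> ('a \<Rightarrow> complex) \<Rightarrow> ('a \<Rightarrow> complex) \<Rightarrow> ('a \<Rightarrow> complex) \<Rightarrow> complex" where
  "T u a b c = (\<Sum>x\<in>G. \<Sum>d\<in>G. chi u d * a x * b (add x d) * c (add (add x d) d)) / (of_nat (card G))\<^sup>2"

lemma add_eq_zero_iff: "a\<in>G \<Longrightarrow> s\<in>G \<Longrightarrow> add a s = zero \<longleftrightarrow> s = neg a"
  using neg_unique neg_r by auto

lemma neg_in': "x \<in> G \<Longrightarrow> neg x \<in> G" by (rule neg_in)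

lemma T_formula: assumes u: "u\<in>G"
  shows "T u a b c = (\<Sum>t\<in>G. F a (add u t) * F b (neg (add u (add t t))) * F c t)"
proof -
  define N where "N = (of_nat (card G) :: complex)"
  have NZ: "N \<noteq> 0" using N_pos N_def by simp
  define K where "K r s t x d = chi (add r (add s t)) x * chi (add u (add s (add t t))) d" for r s t x d
  have K: "chi u d * chi r x * chi s (add x d) * chi t (add (add x d) d) = K r s t x d"
    if "r\<in>G" "s\<in>G" "t\<in>G" "x\<in>G" "d\<in>G" for r s t x d
  proof -
    have "chi s (add x d) = chi s x * chi s d" using that chi_add by simp
    moreover have "chi t (add (add x d) d) = chi t x * chi t d * chi t d" using that chi_add add_in by simp
    moreover have "chi (add r (add s t)) x = chi r x * chi s x * chi t x" using that chi_add_l add_in by simp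
    moreover have "chi (add u (add s (add t t))) d = chi u d * chi s d * chi t d * chi t d"
      using that u chi_add_l add_in by simp
    ultimately show ?thesis unfolding K_def by (simp add: mult_ac)
  qed
  have step1: "(\<Sum>x\<in>G. \<Sum>d\<in>G. chi u d * a x * b (add x d) * c (add (add x d) d))
    = (\<Sum>x\<in>G. \<Sum>d\<in>G. \<Sum>r\<in>G. \<Sum>s\<in>G. \<Sum>t\<in>G. F a r * F b s * F c t * K r s t x d)"
  proof (intro sum.cong refl)
    fix x d assume xd: "x\<in>G" "d\<in>G"
    have "chi u d * a x * b (add x d) * c (add (add x d) d)
      = chi u d * (\<Sum>r\<in>G. F a r * chi r x) * (\<Sum>s\<in>G. F b s * chi s (add x d)) * (\<Sum>t\<in>G. F c t * chi t (add (add x d) d))"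
      using inversion xd add_in by simp
    also have "\<dots> = (\<Sum>r\<in>G. \<Sum>s\<in>G. \<Sum>t\<in>G. chi u d * (F a r * chi r x) * (F b s * chi s (add x d)) * (F c t * chi t (add (add x d) d)))"
      by (rule prod3_sum)
    also have "\<dots> = (\<Sum>r\<in>G. \<Sum>s\<in>G. \<Sum>t\<in>G. F a r * F b s * F c t * K r s t x d)"
    proof (intro sum.cong refl)
      fix r s t assume "r\<in>G" "s\<in>G" "t\<in>G"
      then show "chi u d * (F a r * chi r x) * (F b s * chi s (add x d)) * (F c t * chi t (add (add x d) d)) = F a r * F b s * F c t * K r s t x d"
        using K[of r s t x d] xd by (simp add: mult_ac)
    qed
    finally show "chi u d * a x * b (add x d) * c (add (add x d) d) = (\<Sum>r\<in>G. \<Sum>s\<in>G. \<Sum>t\<in>G. F a r * F b s * F c t * K r s t x d)" .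
  qed
  also have "\<dots> = (\<Sum>r\<in>G. \<Sum>s\<in>G. \<Sum>t\<in>G. \<Sum>x\<in>G. \<Sum>d\<in>G. F a r * F b s * F c t * K r s t x d)"
    by (rule swap5)
  also have "\<dots> = (\<Sum>r\<in>G. \<Sum>s\<in>G. \<Sum>t\<in>G. if add r (add s t) = zero \<and> add u (add s (add t t)) = zero then F a r * F b s * F c t * N\<^sup>2 else 0)"
  proof (intro sum.cong refl)
    fix r s t assume rst: "r\<in>G" "s\<in>G" "t\<in>G"
    have A: "add r (add s t) \<in> G" and B: "add u (add s (add t t)) \<in> G" using rst u add_in by auto
    have "(\<Sum>x\<in>G. \<Sum>d\<in>G. F a r * F b s * F c t * K r s t x d)
      = F a r * F b s * F c t * ((\<Sum>x\<in>G. chi (add r (add s t)) x) * (\<Sum>d\<in>G. chi (add u (add s (add t t))) d))"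
      unfolding K_def using sum2_prod[of "F a r * F b s * F c t" "chi (add r (add s t))" "chi (add u (add s (add t t)))" G G]
      by (simp only: mult.assoc)
    also have "\<dots> = (if add r (add s t) = zero \<and> add u (add s (add t t)) = zero then F a r * F b s * F c t * N\<^sup>2 else 0)"
      using chi_sum[OF A] chi_sum[OF B] chi_zero_l by (auto simp: N_def power2_eq_square)
    finally show "(\<Sum>x\<in>G. \<Sum>d\<in>G. F a r * F b s * F c t * K r s t x d) = (if add r (add s t) = zero \<and> add u (add s (add t t)) = zero then F a r * F b s * F c t * N\<^sup>2 else 0)" .
  qed
  also have "\<dots> = (\<Sum>s\<in>G. \<Sum>t\<in>G. \<Sum>r\<in>G. if add r (add s t) = zero \<and> add u (add s (add t t)) = zero then F a r * F b s * F c t * N\<^sup>2 else 0)"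
    by (subst sum.swap, rule sum.cong[OF refl], rule sum.swap)
  also have "\<dots> = (\<Sum>s\<in>G. \<Sum>t\<in>G. if add u (add s (add t t)) = zero then F a (neg (add s t)) * F b s * F c t * N\<^sup>2 else 0)"
  proof (intro sum.cong refl)
    fix s t assume st: "s\<in>G" "t\<in>G"
    have "add r (add s t) = zero \<longleftrightarrow> r = neg (add s t)" if "r\<in>G" for r
      using add_eq_zero_iff[of "add s t" r] that st add_in comm by simp
    then have "(\<Sum>r\<in>G. if add r (add s t) = zero \<and> add u (add s (add t t)) = zero then F a r * F b s * F c t * N\<^sup>2 else 0)
       = (\<Sum>r\<in>G. if r = neg (add s t) then (if add u (add s (add t t)) = zero then F a r * F b s * F c t * N\<^sup>2 else 0) else 0)"
      by (intro sum.cong refl) auto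
    also have "\<dots> = (if add u (add s (add t t)) = zero then F a (neg (add s t)) * F b s * F c t * N\<^sup>2 else 0)"
      using fin st add_in neg_in by (simp add: sum.delta)
    finally show "(\<Sum>r\<in>G. if add r (add s t) = zero \<and> add u (add s (add t t)) = zero then F a r * F b s * F c t * N\<^sup>2 else 0) = (if add u (add s (add t t)) = zero then F a (neg (add s t)) * F b s * F c t * N\<^sup>2 else 0)" .
  qed
  also have "\<dots> = (\<Sum>t\<in>G. \<Sum>s\<in>G. if add u (add s (add t t)) = zero then F a (neg (add s t)) * F b s * F c t * N\<^sup>2 else 0)"
    by (rule sum.swap)
  also have "\<dots> = (\<Sum>t\<in>G. F a (add u t) * F b (neg (add u (add t t))) * F c t * N\<^sup>2)"
  proof (intro sum.cong refl)
    fix t assume t: "t\<in>G"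
    have w: "add u (add t t) \<in> G" using u t add_in by simp
    have "add u (add s (add t t)) = zero \<longleftrightarrow> s = neg (add u (add t t))" if "s\<in>G" for s
    proof -
      have tt: "add t t \<in> G" using t add_in by simp
      have "add u (add s (add t t)) = add u (add (add t t) s)" using comm[OF that tt] by simp
      also have "\<dots> = add (add u (add t t)) s" using assoc[OF u tt that] by simp
      finally have "add u (add s (add t t)) = add (add u (add t t)) s" .
      then show ?thesis using add_eq_zero_iff[OF w that] by simp
    qed
    then have "(\<Sum>s\<in>G. if add u (add s (add t t)) = zero then F a (neg (add s t)) * F b s * F c t * N\<^sup>2 else 0)
      = (\<Sum>s\<in>G. if s = neg (add u (add t t)) then F a (neg (add s t)) * F b s * F c t * N\<^sup>2 else 0)"
      by (intro sum.cong refl) auto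
    also have "\<dots> = F a (neg (add (neg (add u (add t t))) t)) * F b (neg (add u (add t t))) * F c t * N\<^sup>2"
      using fin w neg_in by (simp add: sum.delta)
    also have "neg (add (neg (add u (add t t))) t) = add u t"
    proof -
      have "neg (add (neg (add u (add t t))) t) = add (add u (add t t)) (neg t)"
        using neg_add w t neg_in neg_neg by simp
      also have "\<dots> = add u (add t (add t (neg t)))" using u t neg_in add_in assoc by simp
      also have "\<dots> = add u t" using t neg_r zero_r by simp
      finally show ?thesis .
    qed
    finally show "(\<Sum>s\<in>G. if add u (add s (add t t)) = zero then F a (neg (add s t)) * F b s * F c t * N\<^sup>2 else 0)
      = F a (add u t) * F b (neg (add u (add t t))) * F c t * N\<^sup>2" .
  qed
  finally have "(\<Sum>x\<in>G. \<Sum>d\<in>G. chi u d * a x * b (add x d) * c (add (add x d) d)) = (\<Sum>t\<in>G. F a (add u t) * F b (neg (add u (add t t))) * F c t) * N\<^sup>2"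
    by (simp add: sum_distrib_right)
  then show ?thesis unfolding T_def using NZ N_def by simp
qed

end


context fgrp
begin

lemma neg_bij: "bij_betw neg G G"
proof -
  have "neg ` G = G"
  proof
    show "neg ` G \<subseteq> G" using neg_in by auto
    show "G \<subseteq> neg ` G"
    proof
      fix x assume "x\<in>G" then show "x \<in> neg ` G" using neg_neg neg_in by (metis image_eqI)
    qed
  qed
  moreover have "inj_on neg G"
  proof (rule inj_onI)
    fix x y assume "x\<in>G" "y\<in>G" "neg x = neg y"
    then show "x = y" using neg_neg by metis
  qed
  ultimately show ?thesis by (simp add: bij_betw_def)
qed

lemma psi_bij: assumes u: "u\<in>G" shows "bij_betw (\<lambda>t. neg (add u (add t t))) G G"
proof -
  have "bij_betw (neg \<circ> (add u \<circ> (\<lambda>t. add t t))) G G"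
    using bij_betw_trans[OF bij_betw_trans[OF dbl trans_bij[OF u]] neg_bij] .
  then show ?thesis by (simp add: comp_def)
qed

lemma bij_CS: assumes "bij_betw \<phi> G G" "bij_betw \<psi> G G"
  shows "(\<Sum>t\<in>G. cmod (X (\<phi> t)) * cmod (Y (\<psi> t))) \<le> sqrt (\<Sum>t\<in>G. (cmod (X t))\<^sup>2) * sqrt (\<Sum>t\<in>G. (cmod (Y t))\<^sup>2)"
proof -
  have e1: "(\<Sum>t\<in>G. (cmod (X (\<phi> t)))\<^sup>2) = (\<Sum>t\<in>G. (cmod (X t))\<^sup>2)"
    using sum.reindex_bij_betw[OF assms(1), of "\<lambda>t. (cmod (X t))\<^sup>2"] by simp
  have e2: "(\<Sum>t\<in>G. (cmod (Y (\<psi> t)))\<^sup>2) = (\<Sum>t\<in>G. (cmod (Y t))\<^sup>2)"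
    using sum.reindex_bij_betw[OF assms(2), of "\<lambda>t. (cmod (Y t))\<^sup>2"] by simp
  have "(\<Sum>t\<in>G. cmod (X (\<phi> t)) * cmod (Y (\<psi> t)))\<^sup>2 \<le> (\<Sum>t\<in>G. (cmod (X t))\<^sup>2) * (\<Sum>t\<in>G. (cmod (Y t))\<^sup>2)"
    using my_CS[of "\<lambda>t. cmod (X (\<phi> t))" "\<lambda>t. cmod (Y (\<psi> t))" G] e1 e2 by simp
  then have "sqrt ((\<Sum>t\<in>G. cmod (X (\<phi> t)) * cmod (Y (\<psi> t)))\<^sup>2) \<le> sqrt ((\<Sum>t\<in>G. (cmod (X t))\<^sup>2) * (\<Sum>t\<in>G. (cmod (Y t))\<^sup>2))"
    using real_sqrt_le_mono by blast
  moreover have "0 \<le> (\<Sum>t\<in>G. cmod (X (\<phi> t)) * cmod (Y (\<psi> t)))" by (simp add: sum_nonneg)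
  ultimately show ?thesis by (simp add: real_sqrt_mult)
qed

definition bnd1 :: "('a \<Rightarrow> complex) \<Rightarrow> bool" where
  "bnd1 a \<longleftrightarrow> (\<forall>x\<in>G. cmod (a x) \<le> 1)"

lemma bnd1_L2: "bnd1 a \<Longrightarrow> sqrt (\<Sum>r\<in>G. (cmod (F a r))\<^sup>2) \<le> 1"
  using L2_le1 unfolding bnd1_def by simp

lemma T_le: assumes u: "u\<in>G"
  shows "cmod (T u a b c) \<le> (\<Sum>t\<in>G. cmod (F a (add u t)) * cmod (F b (neg (add u (add t t)))) * cmod (F c t))"
  unfolding T_formula[OF u] by (rule order_trans[OF norm_sum]) (simp add: norm_mult)

lemma sum3_bound: fixes X Y Z :: "'a \<Rightarrow> real"
  assumes "\<And>t. t\<in>G \<Longrightarrow> 0 \<le> X t" "\<And>t. t\<in>G \<Longrightarrow> 0 \<le> Y t" "\<And>t. t\<in>G \<Longrightarrow> Z t \<le> \<eta>"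
    "(\<Sum>t\<in>G. X t * Y t) \<le> 1" "0 \<le> \<eta>"
  shows "(\<Sum>t\<in>G. X t * Y t * Z t) \<le> \<eta>"
proof -
  have "(\<Sum>t\<in>G. X t * Y t * Z t) \<le> (\<Sum>t\<in>G. X t * Y t * \<eta>)"
  proof (rule sum_mono)
    fix t assume t: "t\<in>G"
    have "0 \<le> X t * Y t" using assms(1)[OF t] assms(2)[OF t] by simp
    then show "X t * Y t * Z t \<le> X t * Y t * \<eta>" using assms(3)[OF t] mult_left_mono by blast
  qed
  also have "\<dots> = (\<Sum>t\<in>G. X t * Y t) * \<eta>" by (simp add: sum_distrib_right)
  also have "\<dots> \<le> 1 * \<eta>" using assms(4) assms(5) mult_right_mono by blast
  finally show ?thesis by simp
qed

lemma prod_le1: "0 \<le> b \<Longrightarrow> sqrt a \<le> 1 \<Longrightarrow> sqrt b \<le> 1 \<Longrightarrow> x \<le> sqrt a * sqrt b \<Longrightarrow> x \<le> (1::real)"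
proof -
  assume h: "0 \<le> b" "sqrt a \<le> 1" "sqrt b \<le> 1" "x \<le> sqrt a * sqrt b"
  have "sqrt a * sqrt b \<le> 1" using h(1,2,3) by (intro mult_le_one) auto
  then show ?thesis using h(4) by linarith
qed

lemma T_small3: assumes u: "u\<in>G" and ab: "bnd1 a" "bnd1 b" and c: "\<And>t. t\<in>G \<Longrightarrow> cmod (F c t) \<le> \<eta>"
  shows "cmod (T u a b c) \<le> \<eta>"
proof -
  have h0: "0 \<le> \<eta>" using c[OF zero_in] norm_ge_zero order_trans by blast
  have "(\<Sum>t\<in>G. cmod (F a (add u t)) * cmod (F b (neg (add u (add t t))))) \<le> 1"
    by (rule prod_le1[OF _ bnd1_L2[OF ab(1)] bnd1_L2[OF ab(2)] bij_CS[OF trans_bij[OF u] psi_bij[OF u]]])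
      (simp add: sum_nonneg)
  note S1 = this
  have "(\<Sum>t\<in>G. cmod (F a (add u t)) * cmod (F b (neg (add u (add t t)))) * cmod (F c t)) \<le> \<eta>"
    by (rule sum3_bound) (use c h0 S1 in auto)
  then show ?thesis using T_le[OF u, where a=a and b=b and c=c] by linarith
qed

lemma T_small2: assumes u: "u\<in>G" and ac: "bnd1 a" "bnd1 c" and b: "\<And>t. t\<in>G \<Longrightarrow> cmod (F b t) \<le> \<eta>"
  shows "cmod (T u a b c) \<le> \<eta>"
proof -
  have h0: "0 \<le> \<eta>" using b[OF zero_in] norm_ge_zero order_trans by blast
  have "(\<Sum>t\<in>G. cmod (F a (add u t)) * cmod (F c (id t))) \<le> 1"
    by (rule prod_le1[OF _ bnd1_L2[OF ac(1)] bnd1_L2[OF ac(2)] bij_CS[OF trans_bij[OF u] bij_betw_id]])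
      (simp add: sum_nonneg)
  note S1 = this
  have "(\<Sum>t\<in>G. cmod (F a (add u t)) * cmod (F c t) * cmod (F b (neg (add u (add t t))))) \<le> \<eta>"
    by (rule sum3_bound) (use b h0 u add_in neg_in S1 in auto)
  moreover have "(\<Sum>t\<in>G. cmod (F a (add u t)) * cmod (F b (neg (add u (add t t)))) * cmod (F c t))
     = (\<Sum>t\<in>G. cmod (F a (add u t)) * cmod (F c t) * cmod (F b (neg (add u (add t t)))))"
    by (simp only: mult_ac)
  ultimately show ?thesis using T_le[OF u, where a=a and b=b and c=c] by linarith
qed

lemma T_small1: assumes u: "u\<in>G" and bc: "bnd1 b" "bnd1 c" and a: "\<And>t. t\<in>G \<Longrightarrow> cmod (F a t) \<le> \<eta>"
  shows "cmod (T u a b c) \<le> \<eta>"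
proof -
  have h0: "0 \<le> \<eta>" using a[OF zero_in] norm_ge_zero order_trans by blast
  have "(\<Sum>t\<in>G. cmod (F b (neg (add u (add t t)))) * cmod (F c (id t))) \<le> 1"
    by (rule prod_le1[OF _ bnd1_L2[OF bc(1)] bnd1_L2[OF bc(2)] bij_CS[OF psi_bij[OF u] bij_betw_id]])
      (simp add: sum_nonneg)
  note S1 = this
  have "(\<Sum>t\<in>G. cmod (F b (neg (add u (add t t)))) * cmod (F c t) * cmod (F a (add u t))) \<le> \<eta>"
    by (rule sum3_bound) (use a h0 u add_in S1 in auto)
  moreover have "(\<Sum>t\<in>G. cmod (F a (add u t)) * cmod (F b (neg (add u (add t t)))) * cmod (F c t))
     = (\<Sum>t\<in>G. cmod (F b (neg (add u (add t t)))) * cmod (F c t) * cmod (F a (add u t)))"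
    by (simp only: mult_ac)
  ultimately show ?thesis using T_le[OF u, where a=a and b=b and c=c] by linarith
qed

definition A :: "'a set \<Rightarrow> ('a \<Rightarrow> real) \<Rightarrow> ('a \<Rightarrow> real) \<Rightarrow> ('a \<Rightarrow> real) \<Rightarrow> real" where
  "A W a b c = (\<Sum>x\<in>G. \<Sum>d\<in>W. a x * b (add x d) * c (add (add x d) d)) / (real (card G) * real (card W))"

lemma A_T: assumes L: "set L \<subseteq> G"
  shows "complex_of_real (A (Ann L) a b c)
     = (\<Sum>u\<in>span L. T u (\<lambda>x. complex_of_real (a x)) (\<lambda>x. complex_of_real (b x)) (\<lambda>x. complex_of_real (c x)))"
proof -
  define N where "N = (of_nat (card G) :: complex)"
  define h where "h x d = complex_of_real (a x * b (add x d) * c (add (add x d) d))" for x d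
  have "(\<Sum>u\<in>span L. T u (\<lambda>x. complex_of_real (a x)) (\<lambda>x. complex_of_real (b x)) (\<lambda>x. complex_of_real (c x)))
     = (\<Sum>u\<in>span L. \<Sum>x\<in>G. \<Sum>d\<in>G. chi u d * h x d) / N\<^sup>2"
    unfolding T_def h_def N_def by (simp add: sum_divide_distrib mult_ac)
  also have "(\<Sum>u\<in>span L. \<Sum>x\<in>G. \<Sum>d\<in>G. chi u d * h x d) = (\<Sum>x\<in>G. \<Sum>d\<in>G. (\<Sum>u\<in>span L. chi u d) * h x d)"
  proof -
    have "(\<Sum>u\<in>span L. \<Sum>x\<in>G. \<Sum>d\<in>G. chi u d * h x d) = (\<Sum>x\<in>G. \<Sum>d\<in>G. \<Sum>u\<in>span L. chi u d * h x d)"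
      by (rule swap3[symmetric])
    then show ?thesis by (simp only: sum_distrib_right)
  qed
  also have "\<dots> = (\<Sum>x\<in>G. \<Sum>d\<in>G. if d \<in> Ann L then of_nat (card (span L)) * h x d else 0)"
    using sum_span[OF L] by (intro sum.cong refl) auto
  also have "\<dots> = (\<Sum>x\<in>G. \<Sum>d\<in>Ann L. of_nat (card (span L)) * h x d)"
  proof -
    have "Ann L = G \<inter> {d. d \<in> Ann L}" using Ann_sub by auto
    then show ?thesis using fin by (simp add: sum.If_cases)
  qed
  also have "\<dots> = of_nat (card (span L)) * (\<Sum>x\<in>G. \<Sum>d\<in>Ann L. h x d)"
    by (simp add: sum_distrib_left)
  finally have 1: "(\<Sum>u\<in>span L. T u (\<lambda>x. complex_of_real (a x)) (\<lambda>x. complex_of_real (b x)) (\<lambda>x. complex_of_real (c x)))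
     = of_nat (card (span L)) * (\<Sum>x\<in>G. \<Sum>d\<in>Ann L. h x d) / N\<^sup>2" by simp
  have e: "N = of_nat (card (span L)) * of_nat (card (Ann L))" using card_dual[OF L] N_def by (metis of_nat_mult)
  have nz: "(of_nat (card (span L))::complex) \<noteq> 0" "(of_nat (card (Ann L))::complex) \<noteq> 0"
    using card_dual[OF L] N_pos by (metis mult_is_0 neq0_conv of_nat_eq_0_iff)+
  have "complex_of_real (A (Ann L) a b c) = (\<Sum>x\<in>G. \<Sum>d\<in>Ann L. h x d) / (N * of_nat (card (Ann L)))"
    unfolding A_def h_def N_def by simp
  also have "\<dots> = of_nat (card (span L)) * (\<Sum>x\<in>G. \<Sum>d\<in>Ann L. h x d) / N\<^sup>2"
    using nz unfolding e by (simp add: field_simps power2_eq_square)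
  finally show ?thesis using 1 by simp
qed

lemma A_fourier_small:
  assumes L: "set L \<subseteq> G" and eta: "0 \<le> \<eta>"
    and bd: "bnd1 (\<lambda>x. complex_of_real (a x))" "bnd1 (\<lambda>x. complex_of_real (b x))" "bnd1 (\<lambda>x. complex_of_real (c x))"
    and sm: "(\<forall>t\<in>G. cmod (F (\<lambda>x. complex_of_real (a x)) t) \<le> \<eta>) \<or> (\<forall>t\<in>G. cmod (F (\<lambda>x. complex_of_real (b x)) t) \<le> \<eta>) \<or> (\<forall>t\<in>G. cmod (F (\<lambda>x. complex_of_real (c x)) t) \<le> \<eta>)"
  shows "\<bar>A (Ann L) a b c\<bar> \<le> real (card (span L)) * \<eta>"
proof -
  have "\<bar>A (Ann L) a b c\<bar> = cmod (complex_of_real (A (Ann L) a b c))" by simp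
  also have "\<dots> \<le> (\<Sum>u\<in>span L. cmod (T u (\<lambda>x. complex_of_real (a x)) (\<lambda>x. complex_of_real (b x)) (\<lambda>x. complex_of_real (c x))))"
    unfolding A_T[OF L] by (rule norm_sum)
  also have "\<dots> \<le> (\<Sum>u\<in>span L. \<eta>)"
  proof (rule sum_mono)
    fix u assume "u \<in> span L"
    then have u: "u\<in>G" using span_sub[OF L] by auto
    show "cmod (T u (\<lambda>x. complex_of_real (a x)) (\<lambda>x. complex_of_real (b x)) (\<lambda>x. complex_of_real (c x))) \<le> \<eta>"
      using sm T_small1[OF u bd(2) bd(3)] T_small2[OF u bd(1) bd(3)] T_small3[OF u bd(1) bd(2)] by blast
  qed
  also have "\<dots> = real (card (span L)) * \<eta>" by simp
  finally show ?thesis .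
qed

end


context fgrp
begin

lemma A_abs_le: "\<bar>A W a b c\<bar> \<le> (\<Sum>x\<in>G. \<Sum>d\<in>W. \<bar>a x\<bar> * \<bar>b (add x d)\<bar> * \<bar>c (add (add x d) d)\<bar>) / (real (card G) * real (card W))"
proof -
  have "\<bar>\<Sum>x\<in>G. \<Sum>d\<in>W. a x * b (add x d) * c (add (add x d) d)\<bar> \<le> (\<Sum>x\<in>G. \<Sum>d\<in>W. \<bar>a x\<bar> * \<bar>b (add x d)\<bar> * \<bar>c (add (add x d) d)\<bar>)"
    by (rule order_trans[OF sum_abs], rule sum_mono, rule order_trans[OF sum_abs]) (simp add: abs_mult)
  then show ?thesis unfolding A_def by (simp add: divide_right_mono)
qed

lemma A_slot1: assumes W: "W \<subseteq> G" "card W > 0" and b: "\<And>x. x\<in>G \<Longrightarrow> \<bar>b x\<bar> \<le> 1" and c: "\<And>x. x\<in>G \<Longrightarrow> \<bar>c x\<bar> \<le> 1"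
  shows "\<bar>A W a b c\<bar> \<le> (\<Sum>x\<in>G. \<bar>a x\<bar>) / real (card G)"
proof -
  have "(\<Sum>x\<in>G. \<Sum>d\<in>W. \<bar>a x\<bar> * \<bar>b (add x d)\<bar> * \<bar>c (add (add x d) d)\<bar>) \<le> (\<Sum>x\<in>G. \<Sum>d\<in>W. \<bar>a x\<bar>)"
  proof (intro sum_mono)
    fix x d assume "x\<in>G" "d\<in>W"
    then have "add x d \<in> G" "add (add x d) d \<in> G" using W add_in by auto
    then have "\<bar>b (add x d)\<bar> * \<bar>c (add (add x d) d)\<bar> \<le> 1" using b c by (simp add: mult_le_one)
    then show "\<bar>a x\<bar> * \<bar>b (add x d)\<bar> * \<bar>c (add (add x d) d)\<bar> \<le> \<bar>a x\<bar>"
      by (metis abs_ge_zero mult.assoc mult_left_le)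
  qed
  also have "\<dots> = real (card W) * (\<Sum>x\<in>G. \<bar>a x\<bar>)" by (simp add: sum_distrib_left)
  finally show ?thesis using A_abs_le[of W a b c] W N_pos
    by (smt (verit, ccfv_SIG) divide_right_mono mult.commute mult_pos_pos nonzero_mult_divide_mult_cancel_left of_nat_0_less_iff)
qed

lemma A_slot2: assumes W: "W \<subseteq> G" "card W > 0" and a: "\<And>x. x\<in>G \<Longrightarrow> \<bar>a x\<bar> \<le> 1" and c: "\<And>x. x\<in>G \<Longrightarrow> \<bar>c x\<bar> \<le> 1"
  shows "\<bar>A W a b c\<bar> \<le> (\<Sum>x\<in>G. \<bar>b x\<bar>) / real (card G)"
proof -
  have "(\<Sum>x\<in>G. \<Sum>d\<in>W. \<bar>a x\<bar> * \<bar>b (add x d)\<bar> * \<bar>c (add (add x d) d)\<bar>) \<le> (\<Sum>x\<in>G. \<Sum>d\<in>W. \<bar>b (add x d)\<bar>)"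
  proof (intro sum_mono)
    fix x d assume "x\<in>G" "d\<in>W"
    then have "x \<in> G" "add (add x d) d \<in> G" using W add_in by auto
    then have "\<bar>a x\<bar> * \<bar>c (add (add x d) d)\<bar> \<le> 1" using a c by (simp add: mult_le_one)
    then show "\<bar>a x\<bar> * \<bar>b (add x d)\<bar> * \<bar>c (add (add x d) d)\<bar> \<le> \<bar>b (add x d)\<bar>"
      by (metis abs_ge_zero mult.commute mult.left_commute mult_left_le)
  qed
  also have "\<dots> = (\<Sum>d\<in>W. \<Sum>x\<in>G. \<bar>b (add x d)\<bar>)" by (rule sum.swap)
  also have "\<dots> = (\<Sum>d\<in>W. \<Sum>x\<in>G. \<bar>b x\<bar>)"
  proof (rule sum.cong[OF refl])
    fix d assume "d\<in>W" then have d: "d\<in>G" using W by auto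
    show "(\<Sum>x\<in>G. \<bar>b (add x d)\<bar>) = (\<Sum>x\<in>G. \<bar>b x\<bar>)" using sum_trans'[OF d, of "\<lambda>x. \<bar>b x\<bar>"] by simp
  qed
  also have "\<dots> = real (card W) * (\<Sum>x\<in>G. \<bar>b x\<bar>)" by simp
  finally show ?thesis using A_abs_le[of W a b c] W N_pos
    by (smt (verit, ccfv_SIG) divide_right_mono mult.commute mult_pos_pos nonzero_mult_divide_mult_cancel_left of_nat_0_less_iff)
qed

lemma A_slot3: assumes W: "W \<subseteq> G" "card W > 0" and a: "\<And>x. x\<in>G \<Longrightarrow> \<bar>a x\<bar> \<le> 1" and b: "\<And>x. x\<in>G \<Longrightarrow> \<bar>b x\<bar> \<le> 1"
  shows "\<bar>A W a b c\<bar> \<le> (\<Sum>x\<in>G. \<bar>c x\<bar>) / real (card G)"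
proof -
  have "(\<Sum>x\<in>G. \<Sum>d\<in>W. \<bar>a x\<bar> * \<bar>b (add x d)\<bar> * \<bar>c (add (add x d) d)\<bar>) \<le> (\<Sum>x\<in>G. \<Sum>d\<in>W. \<bar>c (add (add x d) d)\<bar>)"
  proof (intro sum_mono)
    fix x d assume "x\<in>G" "d\<in>W"
    then have "x \<in> G" "add x d \<in> G" using W add_in by auto
    then have "\<bar>a x\<bar> * \<bar>b (add x d)\<bar> \<le> 1" using a b by (simp add: mult_le_one)
    then show "\<bar>a x\<bar> * \<bar>b (add x d)\<bar> * \<bar>c (add (add x d) d)\<bar> \<le> \<bar>c (add (add x d) d)\<bar>"
      by (metis abs_ge_zero mult.commute mult_left_le)
  qed
  also have "\<dots> = (\<Sum>d\<in>W. \<Sum>x\<in>G. \<bar>c (add (add x d) d)\<bar>)" by (rule sum.swap)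
  also have "\<dots> = (\<Sum>d\<in>W. \<Sum>x\<in>G. \<bar>c x\<bar>)"
  proof (rule sum.cong[OF refl])
    fix d assume "d\<in>W" then have d: "d\<in>G" using W by auto
    have "(\<Sum>x\<in>G. \<bar>c (add (add x d) d)\<bar>) = (\<Sum>x\<in>G. \<bar>c (add x (add d d))\<bar>)"
      using d assoc by (intro sum.cong) auto
    also have "\<dots> = (\<Sum>x\<in>G. \<bar>c x\<bar>)" using sum_trans'[of "add d d" "\<lambda>x. \<bar>c x\<bar>"] d add_in by simp
    finally show "(\<Sum>x\<in>G. \<bar>c (add (add x d) d)\<bar>) = (\<Sum>x\<in>G. \<bar>c x\<bar>)" .
  qed
  also have "\<dots> = real (card W) * (\<Sum>x\<in>G. \<bar>c x\<bar>)" by simp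
  finally show ?thesis using A_abs_le[of W a b c] W N_pos
    by (smt (verit, ccfv_SIG) divide_right_mono mult.commute mult_pos_pos nonzero_mult_divide_mult_cancel_left of_nat_0_less_iff)
qed

lemma A_tele: "A W f f f - A W g g g = A W (\<lambda>x. f x - g x) f f + A W g (\<lambda>x. f x - g x) f + A W g g (\<lambda>x. f x - g x)"
proof -
  define D where "D = real (card G) * real (card W)"
  define S where "S h = (\<Sum>x\<in>G. \<Sum>d\<in>W. h x d)" for h :: "'a \<Rightarrow> 'a \<Rightarrow> real"
  have AS: "A W a b c = S (\<lambda>x d. a x * b (add x d) * c (add (add x d) d)) / D" for a b c
    unfolding A_def S_def D_def ..
  have Sd: "S h1 - S h2 = S (\<lambda>x d. h1 x d - h2 x d)" for h1 h2
    unfolding S_def by (simp add: sum_subtractf)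
  have Sa: "S h1 + S h2 + S h3 = S (\<lambda>x d. h1 x d + h2 x d + h3 x d)" for h1 h2 h3
    unfolding S_def by (simp add: sum.distrib)
  have e: "f x * f y * f z - g x * g y * g z = (f x - g x) * f y * f z + g x * (f y - g y) * f z + g x * g y * (f z - g z)"
    for x y z by (simp add: algebra_simps)
  have "A W f f f - A W g g g = (S (\<lambda>x d. f x * f (add x d) * f (add (add x d) d)) - S (\<lambda>x d. g x * g (add x d) * g (add (add x d) d))) / D"
    unfolding AS by (simp add: diff_divide_distrib)
  also have "\<dots> = (S (\<lambda>x d. (f x - g x) * f (add x d) * f (add (add x d) d)) + S (\<lambda>x d. g x * (f (add x d) - g (add x d)) * f (add (add x d) d))
      + S (\<lambda>x d. g x * g (add x d) * (f (add (add x d) d) - g (add (add x d) d)))) / D"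
    unfolding Sd Sa e ..
  also have "\<dots> = A W (\<lambda>x. f x - g x) f f + A W g (\<lambda>x. f x - g x) f + A W g g (\<lambda>x. f x - g x)"
    unfolding AS by (simp add: add_divide_distrib)
  finally show ?thesis .
qed

lemma sum_abs_le_sqrt: "(\<Sum>x\<in>G. \<bar>m x\<bar>) / real (card G) \<le> sqrt ((\<Sum>x\<in>G. (m x)\<^sup>2) / real (card G))"
proof -
  have "(\<Sum>x\<in>G. 1 * \<bar>m x\<bar>)\<^sup>2 \<le> (\<Sum>x\<in>G. 1\<^sup>2) * (\<Sum>x\<in>G. \<bar>m x\<bar>\<^sup>2)" by (rule my_CS)
  then have "(\<Sum>x\<in>G. \<bar>m x\<bar>)\<^sup>2 \<le> real (card G) * (\<Sum>x\<in>G. (m x)\<^sup>2)" by simp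
  then have "((\<Sum>x\<in>G. \<bar>m x\<bar>) / real (card G))\<^sup>2 \<le> (\<Sum>x\<in>G. (m x)\<^sup>2) / real (card G)"
    using N_pos by (simp add: power_divide field_simps power2_eq_square)
  then show ?thesis using real_le_rsqrt by blast
qed

lemma A_inv: assumes W: "W \<subseteq> G" "card W > 0" and inv: "\<And>x d. x\<in>G \<Longrightarrow> d\<in>W \<Longrightarrow> g (add x d) = g x"
  shows "A W g g g = (\<Sum>x\<in>G. (g x)^3) / real (card G)"
proof -
  have "(\<Sum>x\<in>G. \<Sum>d\<in>W. g x * g (add x d) * g (add (add x d) d)) = (\<Sum>x\<in>G. \<Sum>d\<in>W. (g x)^3)"
  proof (intro sum.cong refl)
    fix x d assume h: "x\<in>G" "d\<in>W"
    then have "add x d \<in> G" using W add_in by auto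
    then show "g x * g (add x d) * g (add (add x d) d) = (g x)^3" using inv h by (simp add: power3_eq_cube)
  qed
  also have "\<dots> = real (card W) * (\<Sum>x\<in>G. (g x)^3)" by (simp add: sum_distrib_left)
  finally show ?thesis unfolding A_def using W by simp
qed

end


fun Lb :: "nat \<Rightarrow> real \<Rightarrow> nat \<Rightarrow> nat" where
  "Lb p \<epsilon> 0 = 0"
| "Lb p \<epsilon> (Suc j) = Lb p \<epsilon> j + nat \<lceil>(6 * real p ^ Lb p \<epsilon> j / \<epsilon>)\<^sup>2\<rceil>"

definition eta :: "nat \<Rightarrow> real \<Rightarrow> nat \<Rightarrow> real" where
  "eta p \<epsilon> j = \<epsilon> / (6 * real p ^ Lb p \<epsilon> j)"

definition Jn :: "real \<Rightarrow> nat" where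
  "Jn \<epsilon> = nat \<lceil>36 / \<epsilon>\<^sup>2\<rceil> + 1"

definition Kb :: "nat \<Rightarrow> real \<Rightarrow> nat" where
  "Kb p \<epsilon> = p ^ Lb p \<epsilon> (Jn \<epsilon>)"

lemma Lb_mono: "j \<le> k \<Longrightarrow> Lb p \<epsilon> j \<le> Lb p \<epsilon> k"
proof (induction k)
  case 0 then show ?case by simp
next
  case (Suc k) then show ?case by (cases "j = Suc k") auto
qed

context fgrp
begin

definition Sset :: "('a \<Rightarrow> real) \<Rightarrow> real \<Rightarrow> nat \<Rightarrow> 'a set" where
  "Sset f \<epsilon> j = {r\<in>G. eta p \<epsilon> j \<le> cmod (F (\<lambda>y. complex_of_real (f y)) r)}"

fun Ls :: "('a \<Rightarrow> real) \<Rightarrow> real \<Rightarrow> nat \<Rightarrow> 'a list" where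
  "Ls f \<epsilon> 0 = []"
| "Ls f \<epsilon> (Suc j) = (SOME xs. set xs = Sset f \<epsilon> j \<and> distinct xs) @ Ls f \<epsilon> j"

lemma Sset_list: "set (SOME xs. set xs = Sset f \<epsilon> j \<and> distinct xs) = Sset f \<epsilon> j \<and> distinct (SOME xs. set xs = Sset f \<epsilon> j \<and> distinct xs)"
proof -
  have "finite (Sset f \<epsilon> j)" using fin by (simp add: Sset_def)
  then have "\<exists>xs. set xs = Sset f \<epsilon> j \<and> distinct xs" using finite_distinct_list by blast
  then show ?thesis by (rule someI_ex)
qed

lemma Sset_sub: "Sset f \<epsilon> j \<subseteq> G" by (auto simp: Sset_def)

lemma Ls_sub: "set (Ls f \<epsilon> j) \<subseteq> G"
proof (induction j)
  case 0 then show ?case by simp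
next
  case (Suc j) then show ?case using Sset_list[of f \<epsilon> j] Sset_sub[of f \<epsilon> j] by simp
qed

lemma Sset_card: assumes e: "\<epsilon> > 0" and f: "\<And>y. y\<in>G \<Longrightarrow> 0 \<le> f y \<and> f y \<le> 1"
  shows "real (card (Sset f \<epsilon> j)) \<le> (6 * real p ^ Lb p \<epsilon> j / \<epsilon>)\<^sup>2"
proof -
  let ?f = "\<lambda>y. complex_of_real (f y)"
  define \<eta> where "\<eta> = eta p \<epsilon> j"
  have pp: "real p ^ Lb p \<epsilon> j > 0" using p_pos by simp
  have eta_pos: "\<eta> > 0" using e pp by (simp add: \<eta>_def eta_def)
  have "real (card (Sset f \<epsilon> j)) * \<eta>\<^sup>2 = (\<Sum>r\<in>Sset f \<epsilon> j. \<eta>\<^sup>2)" by simp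
  also have "\<dots> \<le> (\<Sum>r\<in>Sset f \<epsilon> j. (cmod (F ?f r))\<^sup>2)"
    using eta_pos by (intro sum_mono power_mono) (auto simp: Sset_def \<eta>_def)
  also have "\<dots> \<le> (\<Sum>r\<in>G. (cmod (F ?f r))\<^sup>2)"
    using fin by (intro sum_mono2) (auto simp: Sset_def)
  also have "\<dots> \<le> 1" using f by (intro L2_le1) auto
  finally have "real (card (Sset f \<epsilon> j)) \<le> 1 / \<eta>\<^sup>2" using eta_pos by (simp add: field_simps)
  also have "1 / \<eta>\<^sup>2 = (6 * real p ^ Lb p \<epsilon> j / \<epsilon>)\<^sup>2" using e pp
    by (simp add: \<eta>_def eta_def power_divide)
  finally show ?thesis .
qed

lemma Ls_len: assumes e: "\<epsilon> > 0" and f: "\<And>y. y\<in>G \<Longrightarrow> 0 \<le> f y \<and> f y \<le> 1"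
  shows "length (Ls f \<epsilon> j) \<le> Lb p \<epsilon> j"
proof (induction j)
  case 0 then show ?case by simp
next
  case (Suc j)
  have "length (SOME xs. set xs = Sset f \<epsilon> j \<and> distinct xs) = card (Sset f \<epsilon> j)"
    using Sset_list distinct_card by metis
  also have "\<dots> \<le> nat \<lceil>(6 * real p ^ Lb p \<epsilon> j / \<epsilon>)\<^sup>2\<rceil>"
    using Sset_card[where f=f and j=j and \<epsilon>=\<epsilon>, OF e f] by linarith
  finally show ?case using Suc by simp
qed

lemma card_span_Ls: assumes e: "\<epsilon> > 0" and f: "\<And>y. y\<in>G \<Longrightarrow> 0 \<le> f y \<and> f y \<le> 1"
  shows "card (span (Ls f \<epsilon> j)) \<le> p ^ Lb p \<epsilon> j"
  using card_span[of "Ls f \<epsilon> j"] Ls_len[where f=f and j=j and \<epsilon>=\<epsilon>, OF e f] p_pos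
  by (meson le_trans one_le_numeral less_imp_le power_increasing)

lemma span_Ls_mono: "span (Ls f \<epsilon> j) \<subseteq> span (Ls f \<epsilon> (Suc j))"
  using span_append_sup Ls_sub by (metis Ls.simps(2))

lemma Sset_in_span: "Sset f \<epsilon> j \<subseteq> span (Ls f \<epsilon> (Suc j))"
  using set_span[OF Ls_sub[of f \<epsilon> "Suc j"]] Sset_list by auto

lemma En_step: "En (Ls f \<epsilon> (Suc j)) f - En (Ls f \<epsilon> j) f
   = (\<Sum>x\<in>G. (Pr (Ls f \<epsilon> (Suc j)) f x - Pr (Ls f \<epsilon> j) f x)\<^sup>2) / real (card G)"
  using En_diff[OF Ls_sub Ls_sub span_Ls_mono] by simp

lemma En_mono_step: "En (Ls f \<epsilon> j) f \<le> En (Ls f \<epsilon> (Suc j)) f"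
  using En_step[of f \<epsilon> j] by (smt (verit) divide_nonneg_nonneg of_nat_0_le_iff sum_nonneg zero_le_power2)

lemma pigeon: assumes f: "\<And>y. y\<in>G \<Longrightarrow> 0 \<le> f y \<and> f y \<le> 1" and s: "\<sigma> > 0" and J: "real J * \<sigma> > 1"
  shows "\<exists>j<J. En (Ls f \<epsilon> (Suc j)) f - En (Ls f \<epsilon> j) f \<le> \<sigma>"
proof (rule ccontr)
  assume "\<not> ?thesis"
  then have h: "\<And>j. j < J \<Longrightarrow> En (Ls f \<epsilon> (Suc j)) f - En (Ls f \<epsilon> j) f > \<sigma>" by force
  have "j \<le> J \<Longrightarrow> En (Ls f \<epsilon> j) f \<ge> real j * \<sigma>" for j
  proof (induction j)
    case 0 then show ?case using En_nonneg by simp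
  next
    case (Suc j) then show ?case using h[of j] by (simp add: algebra_simps)
  qed
  then have "En (Ls f \<epsilon> J) f \<ge> real J * \<sigma>" by simp
  moreover have "En (Ls f \<epsilon> J) f \<le> 1" using En_le[OF Ls_sub f] .
  ultimately show False using J by simp
qed

end


context fgrp
begin

lemma tele_bound: assumes "\<bar>A W (\<lambda>x. f x - s x) f f\<bar> \<le> B" "\<bar>A W s (\<lambda>x. f x - s x) f\<bar> \<le> B" "\<bar>A W s s (\<lambda>x. f x - s x)\<bar> \<le> B"
  shows "\<bar>A W f f f - A W s s s\<bar> \<le> 3 * B"
  using A_tele[of W f s] assms by linarith

lemma Ann_Nil: "Ann [] = G" by (simp add: Ann_def)

lemma bnd1_real: "(\<And>x. x\<in>G \<Longrightarrow> 0 \<le> f x \<and> f x \<le> 1) \<Longrightarrow> bnd1 (\<lambda>x. complex_of_real (f x))"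
  unfolding bnd1_def by auto

lemma fourier_part: assumes L: "set L \<subseteq> G" and eta: "0 \<le> \<eta>"
  and f: "\<And>x. x\<in>G \<Longrightarrow> 0 \<le> f x \<and> f x \<le> 1" and s: "\<And>x. x\<in>G \<Longrightarrow> 0 \<le> s x \<and> s x \<le> 1"
  and sm: "\<And>t. t\<in>G \<Longrightarrow> cmod (F (\<lambda>x. complex_of_real (f x - s x)) t) \<le> \<eta>"
  shows "\<bar>A (Ann L) f f f - A (Ann L) s s s\<bar> \<le> 3 * (real (card (span L)) * \<eta>)"
proof -
  have bf: "bnd1 (\<lambda>x. complex_of_real (f x))" using bnd1_real f by blast
  have bs: "bnd1 (\<lambda>x. complex_of_real (s x))" using bnd1_real s by blast
  have bk: "bnd1 (\<lambda>x. complex_of_real (f x - s x))" unfolding bnd1_def norm_of_real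
  proof
    fix x assume x: "x\<in>G" then show "\<bar>f x - s x\<bar> \<le> 1" using f[OF x] s[OF x] by (auto simp: abs_le_iff)
  qed
  show ?thesis
    by (rule tele_bound; rule A_fourier_small[OF L eta]) (use bf bs bk sm in auto)
qed

lemma phys_part: assumes W: "W \<subseteq> G" "card W > 0"
  and s: "\<And>x. x\<in>G \<Longrightarrow> 0 \<le> s x \<and> s x \<le> 1" and g: "\<And>x. x\<in>G \<Longrightarrow> 0 \<le> g x \<and> g x \<le> 1"
  shows "\<bar>A W s s s - A W g g g\<bar> \<le> 3 * sqrt ((\<Sum>x\<in>G. (s x - g x)\<^sup>2) / real (card G))"
proof -
  have s1: "\<And>x. x\<in>G \<Longrightarrow> \<bar>s x\<bar> \<le> 1" using s by auto
  have g1: "\<And>x. x\<in>G \<Longrightarrow> \<bar>g x\<bar> \<le> 1" using g by auto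
  have B: "(\<Sum>x\<in>G. \<bar>s x - g x\<bar>) / real (card G) \<le> sqrt ((\<Sum>x\<in>G. (s x - g x)\<^sup>2) / real (card G))"
    by (rule sum_abs_le_sqrt)
  show ?thesis
  proof (rule tele_bound)
    show "\<bar>A W (\<lambda>x. s x - g x) s s\<bar> \<le> sqrt ((\<Sum>x\<in>G. (s x - g x)\<^sup>2) / real (card G))"
      using A_slot1[where a="\<lambda>x. s x - g x" and b=s and c=s, OF W s1 s1] B by linarith
    show "\<bar>A W g (\<lambda>x. s x - g x) s\<bar> \<le> sqrt ((\<Sum>x\<in>G. (s x - g x)\<^sup>2) / real (card G))"
      using A_slot2[where b="\<lambda>x. s x - g x" and a=g and c=s, OF W g1 s1] B by linarith
    show "\<bar>A W g g (\<lambda>x. s x - g x)\<bar> \<le> sqrt ((\<Sum>x\<in>G. (s x - g x)\<^sup>2) / real (card G))"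
      using A_slot3[where c="\<lambda>x. s x - g x" and a=g and b=g, OF W g1 g1] B by linarith
  qed
qed

theorem regularity: assumes e: "\<epsilon> > 0" and f: "\<And>y. y\<in>G \<Longrightarrow> 0 \<le> f y \<and> f y \<le> 1"
  shows "\<exists>L. set L \<subseteq> G \<and> card (span L) \<le> Kb p \<epsilon> \<and>
     \<bar>A G f f f - A G (Pr L f) (Pr L f) (Pr L f)\<bar> \<le> \<epsilon> \<and>
     \<bar>A (Ann L) f f f - A (Ann L) (Pr L f) (Pr L f) (Pr L f)\<bar> \<le> \<epsilon>"
proof -
  define \<sigma> where "\<sigma> = \<epsilon>\<^sup>2 / 36"
  have sp: "\<sigma> > 0" using e by (simp add: \<sigma>_def)
  have J: "real (Jn \<epsilon>) * \<sigma> > 1"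
  proof -
    have "real (Jn \<epsilon>) \<ge> 36 / \<epsilon>\<^sup>2 + 1" unfolding Jn_def by linarith
    then have "real (Jn \<epsilon>) * \<sigma> \<ge> (36 / \<epsilon>\<^sup>2 + 1) * \<sigma>" using sp by (simp add: mult_right_mono)
    also have "(36 / \<epsilon>\<^sup>2 + 1) * \<sigma> = 1 + \<sigma>" using e by (simp add: \<sigma>_def field_simps)
    finally show ?thesis using sp by linarith
  qed
  obtain j where j: "j < Jn \<epsilon>" and gap: "En (Ls f \<epsilon> (Suc j)) f - En (Ls f \<epsilon> j) f \<le> \<sigma>"
    using pigeon[where f=f and \<epsilon>=\<epsilon>, OF f sp J] by blast
  define L where "L = Ls f \<epsilon> j"
  define L' where "L' = Ls f \<epsilon> (Suc j)"
  define s where "s = Pr L' f"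
  define g where "g = Pr L f"
  define \<eta> where "\<eta> = eta p \<epsilon> j"
  have LG: "set L \<subseteq> G" "set L' \<subseteq> G" unfolding L_def L'_def by (rule Ls_sub)+
  have pp: "real p ^ Lb p \<epsilon> j \<ge> 1" using p_pos by simp
  have eta_pos: "\<eta> > 0" using e pp p_pos unfolding \<eta>_def eta_def by (intro divide_pos_pos) auto
  have cs: "real (card (span L)) \<le> real p ^ Lb p \<epsilon> j"
    using card_span_Ls[where f=f and \<epsilon>=\<epsilon> and j=j, OF e f] L_def by (metis of_nat_le_iff of_nat_power)
  have ceta: "real (card (span L)) * \<eta> \<le> \<epsilon> / 6"
  proof -
    have "real (card (span L)) * \<eta> \<le> real p ^ Lb p \<epsilon> j * \<eta>" using cs eta_pos by (simp add: mult_right_mono)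
    also have "\<dots> = \<epsilon> / 6" using pp p_pos by (simp add: \<eta>_def eta_def)
    finally show ?thesis .
  qed
  have eta6: "\<eta> \<le> \<epsilon> / 6"
  proof -
    have "\<eta> = \<epsilon> / 6 / real p ^ Lb p \<epsilon> j" by (simp add: \<eta>_def eta_def)
    also have "\<dots> \<le> \<epsilon> / 6" using pp e by (simp add: divide_le_eq)
    finally show ?thesis .
  qed
  have cK: "card (span L) \<le> Kb p \<epsilon>"
  proof -
    have "card (span L) \<le> p ^ Lb p \<epsilon> j" using card_span_Ls[where f=f and \<epsilon>=\<epsilon> and j=j, OF e f] L_def by simp
    also have "\<dots> \<le> p ^ Lb p \<epsilon> (Jn \<epsilon>)" using p_pos Lb_mono[of j "Jn \<epsilon>" p \<epsilon>] j by (simp add: power_increasing)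
    finally show ?thesis by (simp add: Kb_def)
  qed
  have s01: "\<And>x. x\<in>G \<Longrightarrow> 0 \<le> s x \<and> s x \<le> 1" using Pr_bounds[where f=f, OF LG(2) _ f] s_def by auto
  have g01: "\<And>x. x\<in>G \<Longrightarrow> 0 \<le> g x \<and> g x \<le> 1" using Pr_bounds[where f=f, OF LG(1) _ f] g_def by auto
  have sm: "cmod (F (\<lambda>x. complex_of_real (f x - s x)) t) \<le> \<eta>" if t: "t\<in>G" for t
  proof -
    let ?f = "\<lambda>y. complex_of_real (f y)"
    have "F (\<lambda>x. complex_of_real (f x - s x)) t = F (\<lambda>x. ?f x - P L' ?f x) t"
      using P_real[OF LG(2)] s_def by (intro F_cong) simp
    also have "\<dots> = F ?f t - F (P L' ?f) t" by (rule F_diff)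
    also have "\<dots> = (if t \<in> span L' then 0 else F ?f t)" using F_P[OF LG(2) t] by simp
    finally have e1: "F (\<lambda>x. complex_of_real (f x - s x)) t = (if t \<in> span L' then 0 else F ?f t)" .
    show ?thesis
    proof (cases "t \<in> span L'")
      case True then show ?thesis using e1 eta_pos by simp
    next
      case False
      then have "t \<notin> Sset f \<epsilon> j" using Sset_in_span L'_def by auto
      then show ?thesis using e1 False t by (auto simp: Sset_def \<eta>_def)
    qed
  qed
  have phys_gap: "sqrt ((\<Sum>x\<in>G. (s x - g x)\<^sup>2) / real (card G)) \<le> \<epsilon> / 6"
  proof -
    have "(\<Sum>x\<in>G. (s x - g x)\<^sup>2) / real (card G) \<le> \<sigma>" using En_step[of f \<epsilon> j] gap s_def g_def L_def L'_def by simp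
    then have "sqrt ((\<Sum>x\<in>G. (s x - g x)\<^sup>2) / real (card G)) \<le> sqrt \<sigma>" by simp
    also have "sqrt \<sigma> = \<epsilon> / 6" using e by (simp add: \<sigma>_def real_sqrt_divide)
    finally show ?thesis .
  qed
  have W: "Ann L \<subseteq> G" "card (Ann L) > 0" using Ann_sub cA_pos[OF LG(1)] by auto
  have G0: "G \<subseteq> G" "card G > 0" using N_pos by auto
  have F1: "\<bar>A (Ann L) f f f - A (Ann L) s s s\<bar> \<le> 3 * (\<epsilon> / 6)"
    using fourier_part[where f=f and s=s and \<eta>=\<eta>, OF LG(1) _ f s01 sm] eta_pos ceta by (smt (verit))
  have F2: "\<bar>A G f f f - A G s s s\<bar> \<le> 3 * (\<epsilon> / 6)"
    using fourier_part[where L="[]" and f=f and s=s and \<eta>=\<eta>, OF _ _ f s01 sm] eta_pos eta6 by (simp add: Ann_Nil)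
  have P1: "\<bar>A (Ann L) s s s - A (Ann L) g g g\<bar> \<le> 3 * (\<epsilon> / 6)"
    using phys_part[where s=s and g=g, OF W s01 g01] phys_gap by linarith
  have P2: "\<bar>A G s s s - A G g g g\<bar> \<le> 3 * (\<epsilon> / 6)"
    using phys_part[where s=s and g=g, OF G0 s01 g01] phys_gap by linarith
  have "\<bar>A G f f f - A G g g g\<bar> \<le> \<epsilon>" using F2 P2 by linarith
  moreover have "\<bar>A (Ann L) f f f - A (Ann L) g g g\<bar> \<le> \<epsilon>" using F1 P1 by linarith
  ultimately show ?thesis
    using LG(1) cK unfolding g_def by blast
qed

end


context fgrp
begin

lemma sum_d1: fixes h :: "'a \<Rightarrow> real" shows "x\<in>G \<Longrightarrow> (\<Sum>d\<in>G. h (add x d)) = (\<Sum>y\<in>G. h y)"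
  using sum_trans by blast

lemma sum_d2: fixes h :: "'a \<Rightarrow> real" assumes x: "x\<in>G" shows "(\<Sum>d\<in>G. h (add (add x d) d)) = (\<Sum>y\<in>G. h y)"
proof -
  have "(\<Sum>d\<in>G. h (add (add x d) d)) = (\<Sum>d\<in>G. h (add x (add d d)))"
    using x assoc by (intro sum.cong) auto
  also have "\<dots> = (\<Sum>d\<in>G. h (add x d))" using sum_dbl[of "\<lambda>d. h (add x d)"] by simp
  also have "\<dots> = (\<Sum>y\<in>G. h y)" using sum_trans x by blast
  finally show ?thesis .
qed

lemma pair23: fixes h :: "'a \<Rightarrow> real" shows "(\<Sum>x\<in>G. \<Sum>d\<in>G. h (add x d) * h (add (add x d) d)) = (\<Sum>y\<in>G. h y) * (\<Sum>y\<in>G. h y)"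
proof -
  have "(\<Sum>x\<in>G. \<Sum>d\<in>G. h (add x d) * h (add (add x d) d)) = (\<Sum>d\<in>G. \<Sum>x\<in>G. h (add x d) * h (add (add x d) d))"
    by (rule sum.swap)
  also have "\<dots> = (\<Sum>d\<in>G. \<Sum>y\<in>G. h y * h (add y d))"
  proof (rule sum.cong[OF refl])
    fix d assume d: "d\<in>G"
    show "(\<Sum>x\<in>G. h (add x d) * h (add (add x d) d)) = (\<Sum>y\<in>G. h y * h (add y d))"
      using sum_trans'[OF d, of "\<lambda>y. h y * h (add y d)"] by simp
  qed
  also have "\<dots> = (\<Sum>y\<in>G. \<Sum>d\<in>G. h y * h (add y d))" by (rule sum.swap)
  also have "\<dots> = (\<Sum>y\<in>G. h y * (\<Sum>d\<in>G. h (add y d)))" by (simp add: sum_distrib_left)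
  also have "\<dots> = (\<Sum>y\<in>G. h y * (\<Sum>y\<in>G. h y))" using sum_d1 by (intro sum.cong) auto
  finally show ?thesis by (simp add: sum_distrib_right)
qed

lemma A_split: fixes g :: "'a \<Rightarrow> real"
  assumes m: "(\<Sum>x\<in>G. g x) = real (card G) * \<alpha>"
  shows "A G g g g = \<alpha>^3 + A G (\<lambda>x. g x - \<alpha>) (\<lambda>x. g x - \<alpha>) (\<lambda>x. g x - \<alpha>)"
proof -
  define h where "h x = g x - \<alpha>" for x
  define N where "N = real (card G)"
  have hs: "(\<Sum>x\<in>G. h x) = 0" using m by (simp add: h_def sum_subtractf N_def)
  have e: "g x * g y * g z = \<alpha>^3 + \<alpha>^2 * h x + \<alpha>^2 * h y + \<alpha>^2 * h z + \<alpha> * (h x * h y) + \<alpha> * (h x * h z) + \<alpha> * (h y * h z) + h x * h y * h z" for x y z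
    by (simp add: h_def algebra_simps power2_eq_square power3_eq_cube)
  have s1: "(\<Sum>x\<in>G. \<Sum>d\<in>G. h x) = 0" using hs by (simp add: sum_distrib_left[symmetric])
  have s2: "(\<Sum>x\<in>G. \<Sum>d\<in>G. h (add x d)) = 0"
  proof -
    have "(\<Sum>x\<in>G. \<Sum>d\<in>G. h (add x d)) = (\<Sum>x\<in>G. 0)" by (rule sum.cong[OF refl]) (simp add: sum_d1 hs)
    then show ?thesis by simp
  qed
  have s3: "(\<Sum>x\<in>G. \<Sum>d\<in>G. h (add (add x d) d)) = 0"
  proof -
    have "(\<Sum>x\<in>G. \<Sum>d\<in>G. h (add (add x d) d)) = (\<Sum>x\<in>G. 0)" by (rule sum.cong[OF refl]) (simp add: sum_d2 hs)
    then show ?thesis by simp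
  qed
  have s4: "(\<Sum>x\<in>G. \<Sum>d\<in>G. h x * h (add x d)) = 0"
  proof -
    have "(\<Sum>x\<in>G. \<Sum>d\<in>G. h x * h (add x d)) = (\<Sum>x\<in>G. 0)"
      by (rule sum.cong[OF refl]) (simp add: sum_distrib_left[symmetric] sum_d1 hs)
    then show ?thesis by simp
  qed
  have s5: "(\<Sum>x\<in>G. \<Sum>d\<in>G. h x * h (add (add x d) d)) = 0"
  proof -
    have "(\<Sum>x\<in>G. \<Sum>d\<in>G. h x * h (add (add x d) d)) = (\<Sum>x\<in>G. 0)"
      by (rule sum.cong[OF refl]) (simp add: sum_distrib_left[symmetric] sum_d2 hs)
    then show ?thesis by simp
  qed
  have s6: "(\<Sum>x\<in>G. \<Sum>d\<in>G. h (add x d) * h (add (add x d) d)) = 0" using pair23 hs by simp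
  have "(\<Sum>x\<in>G. \<Sum>d\<in>G. g x * g (add x d) * g (add (add x d) d))
    = (\<Sum>x\<in>G. \<Sum>d\<in>G. \<alpha>^3) + \<alpha>^2 * (\<Sum>x\<in>G. \<Sum>d\<in>G. h x) + \<alpha>^2 * (\<Sum>x\<in>G. \<Sum>d\<in>G. h (add x d))
      + \<alpha>^2 * (\<Sum>x\<in>G. \<Sum>d\<in>G. h (add (add x d) d)) + \<alpha> * (\<Sum>x\<in>G. \<Sum>d\<in>G. h x * h (add x d))
      + \<alpha> * (\<Sum>x\<in>G. \<Sum>d\<in>G. h x * h (add (add x d) d)) + \<alpha> * (\<Sum>x\<in>G. \<Sum>d\<in>G. h (add x d) * h (add (add x d) d))
      + (\<Sum>x\<in>G. \<Sum>d\<in>G. h x * h (add x d) * h (add (add x d) d))"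
    unfolding e by (simp only: sum.distrib sum_distrib_left)
  also have "\<dots> = N * N * \<alpha>^3 + (\<Sum>x\<in>G. \<Sum>d\<in>G. h x * h (add x d) * h (add (add x d) d))"
    unfolding s1 s2 s3 s4 s5 s6 by (simp add: N_def)
  finally have "(\<Sum>x\<in>G. \<Sum>d\<in>G. g x * g (add x d) * g (add (add x d) d)) = N * N * \<alpha>^3 + (\<Sum>x\<in>G. \<Sum>d\<in>G. h x * h (add x d) * h (add (add x d) d))" .
  moreover have "N > 0" using N_pos N_def by simp
  ultimately show ?thesis unfolding A_def h_def[symmetric] N_def[symmetric] by (simp add: field_simps)
qed

lemma A_hhh: fixes h :: "'a \<Rightarrow> real" shows "\<bar>A G h h h\<bar> \<le> ((\<Sum>x\<in>G. (h x)\<^sup>2) / real (card G)) * sqrt ((\<Sum>x\<in>G. (h x)\<^sup>2) / real (card G))"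
proof -
  define N where "N = real (card G)"
  define V where "V = (\<Sum>x\<in>G. (h x)\<^sup>2)"
  have Np: "N > 0" using N_pos N_def by simp
  have V0: "V \<ge> 0" unfolding V_def by (simp add: sum_nonneg)
  let ?S = "\<lambda>(x,d). h x * h (add x d)"
  let ?T = "\<lambda>(x,d). h (add (add x d) d)"
  have "(\<Sum>x\<in>G. \<Sum>d\<in>G. h x * h (add x d) * h (add (add x d) d)) = (\<Sum>(x,d)\<in>G\<times>G. h x * h (add x d) * h (add (add x d) d))"
    by (rule sum.cartesian_product)
  also have "\<dots> = (\<Sum>z\<in>G\<times>G. ?S z * ?T z)" by (intro sum.cong refl) (auto simp: split_beta)
  also have "\<bar>\<dots>\<bar> \<le> sqrt ((\<Sum>z\<in>G\<times>G. (?S z)\<^sup>2) * (\<Sum>z\<in>G\<times>G. (?T z)\<^sup>2))"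
  proof -
    have c: "(\<Sum>z\<in>G\<times>G. ?S z * ?T z)\<^sup>2 \<le> (\<Sum>z\<in>G\<times>G. (?S z)\<^sup>2) * (\<Sum>z\<in>G\<times>G. (?T z)\<^sup>2)" by (rule my_CS)
    show ?thesis using real_sqrt_le_mono[OF c] by simp
  qed
  also have "(\<Sum>z\<in>G\<times>G. (?S z)\<^sup>2) = V * V"
  proof -
    have "(\<Sum>z\<in>G\<times>G. (?S z)\<^sup>2) = (\<Sum>x\<in>G. \<Sum>d\<in>G. (h x * h (add x d))\<^sup>2)"
      by (subst sum.cartesian_product) (auto intro!: sum.cong simp: split_beta)
    also have "\<dots> = (\<Sum>x\<in>G. (h x)\<^sup>2 * (\<Sum>d\<in>G. (h (add x d))\<^sup>2))"
      by (simp add: power_mult_distrib sum_distrib_left)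
    also have "\<dots> = (\<Sum>x\<in>G. (h x)\<^sup>2 * V)" unfolding V_def using sum_d1[of _ "\<lambda>y. (h y)\<^sup>2"] by (intro sum.cong) auto
    finally show ?thesis by (simp add: sum_distrib_right V_def)
  qed
  also have "(\<Sum>z\<in>G\<times>G. (?T z)\<^sup>2) = N * V"
  proof -
    have "(\<Sum>z\<in>G\<times>G. (?T z)\<^sup>2) = (\<Sum>x\<in>G. \<Sum>d\<in>G. (h (add (add x d) d))\<^sup>2)"
      by (subst sum.cartesian_product) (auto intro!: sum.cong simp: split_beta)
    also have "\<dots> = (\<Sum>x\<in>G. V)" unfolding V_def by (rule sum.cong[OF refl]) (use sum_d2[of _ "\<lambda>y. (h y)\<^sup>2"] in auto)
    finally show ?thesis by (simp add: N_def)
  qed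
  finally have 1: "\<bar>\<Sum>x\<in>G. \<Sum>d\<in>G. h x * h (add x d) * h (add (add x d) d)\<bar> \<le> sqrt (V * V * (N * V))" .
  have "sqrt (V * V * (N * V)) = V * sqrt (N * V)" using V0 by (simp add: real_sqrt_mult)
  also have "\<dots> = N * N * ((V / N) * sqrt (V / N))"
  proof -
    have "N * V = N\<^sup>2 * (V / N)" using Np by (simp add: power2_eq_square)
    then have "sqrt (N * V) = sqrt (N\<^sup>2) * sqrt (V / N)" by (simp only: real_sqrt_mult)
    then have "sqrt (N * V) = N * sqrt (V / N)" using Np by simp
    then show ?thesis using Np by (simp add: field_simps)
  qed
  finally have "\<bar>\<Sum>x\<in>G. \<Sum>d\<in>G. h x * h (add x d) * h (add (add x d) d)\<bar> \<le> N * N * ((V / N) * sqrt (V / N))"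
    using 1 by linarith
  then show ?thesis unfolding A_def N_def[symmetric] V_def[symmetric] using Np
    by (simp add: abs_divide divide_le_eq mult.commute mult.left_commute)
qed

end


context fgrp
begin

lemma A_nonneg: assumes W: "W \<subseteq> G" and g: "\<And>x. x\<in>G \<Longrightarrow> 0 \<le> g x" shows "0 \<le> A W g g g"
  unfolding A_def using W g add_in by (intro divide_nonneg_nonneg sum_nonneg mult_nonneg_nonneg) auto

lemma key_ineq: assumes g: "\<And>x. x\<in>G \<Longrightarrow> 0 \<le> g x \<and> g x \<le> 1"
  and m: "(\<Sum>x\<in>G. g x) = real (card G) * \<alpha>"
  shows "3 * \<alpha>^3 \<le> 2 * ((\<Sum>x\<in>G. (g x)^3) / real (card G)) + A G g g g"
proof -
  define N where "N = real (card G)"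
  define h where "h x = g x - \<alpha>" for x
  define V where "V = (\<Sum>x\<in>G. (h x)\<^sup>2) / N"
  define H3 where "H3 = (\<Sum>x\<in>G. (h x)^3) / N"
  have Np: "N > 0" using N_pos N_def by simp
  have a0: "\<alpha> \<ge> 0"
  proof -
    have "0 \<le> (\<Sum>x\<in>G. g x)" using g by (simp add: sum_nonneg)
    then show ?thesis using m Np N_def by (simp add: zero_le_mult_iff)
  qed
  have hs: "(\<Sum>x\<in>G. h x) = 0" using m by (simp add: h_def sum_subtractf N_def)
  have V0: "V \<ge> 0" unfolding V_def using Np by (simp add: sum_nonneg)
  have cube: "(\<Sum>x\<in>G. (g x)^3) / N = \<alpha>^3 + 3 * \<alpha> * V + H3"
  proof -
    have "(g x)^3 = \<alpha>^3 + 3 * \<alpha>^2 * h x + 3 * \<alpha> * (h x)\<^sup>2 + (h x)^3" for x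
      by (simp add: h_def power2_eq_square power3_eq_cube algebra_simps)
    then have "(\<Sum>x\<in>G. (g x)^3) = (\<Sum>x\<in>G. \<alpha>^3) + 3 * \<alpha>^2 * (\<Sum>x\<in>G. h x) + 3 * \<alpha> * (\<Sum>x\<in>G. (h x)\<^sup>2) + (\<Sum>x\<in>G. (h x)^3)"
      by (simp add: sum.distrib sum_distrib_left)
    then show ?thesis using Np hs unfolding V_def H3_def N_def by (simp add: field_simps)
  qed
  have H3b: "H3 \<ge> - \<alpha> * V"
  proof -
    have "(h x)^3 \<ge> - \<alpha> * (h x)\<^sup>2" if "x\<in>G" for x
    proof -
      have "(h x)^3 + \<alpha> * (h x)\<^sup>2 = (h x)\<^sup>2 * g x" by (simp add: h_def power2_eq_square power3_eq_cube algebra_simps)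
      also have "\<dots> \<ge> 0" using g[OF that] by simp
      finally show ?thesis by simp
    qed
    then have "(\<Sum>x\<in>G. (h x)^3) \<ge> (\<Sum>x\<in>G. - \<alpha> * (h x)\<^sup>2)" by (intro sum_mono) auto
    then have "(\<Sum>x\<in>G. (h x)^3) \<ge> - \<alpha> * (\<Sum>x\<in>G. (h x)\<^sup>2)" by (simp add: sum_distrib_left)
    then show ?thesis unfolding H3_def V_def using Np by (simp add: divide_le_eq field_simps)
  qed
  have hh: "h = (\<lambda>x. g x - \<alpha>)" using h_def by auto
  have Asplit: "A G g g g = \<alpha>^3 + A G h h h" using A_split[OF m] unfolding hh .
  have Ah: "\<bar>A G h h h\<bar> \<le> V * sqrt V" using A_hhh[of h] unfolding V_def N_def .
  have A0: "A G g g g \<ge> 0" using A_nonneg[of G g] g by auto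
  show ?thesis
  proof (cases "V \<ge> \<alpha>\<^sup>2 / 4")
    case True
    have "3 * \<alpha>^3 \<le> 2 * \<alpha>^3 + 4 * \<alpha> * V"
    proof -
      have "\<alpha>^3 = \<alpha> * \<alpha>\<^sup>2" by (simp add: power2_eq_square power3_eq_cube)
      also have "\<dots> \<le> \<alpha> * (4 * V)" using True a0 by (intro mult_left_mono) auto
      finally show ?thesis by simp
    qed
    also have "\<dots> \<le> 2 * (\<alpha>^3 + 3 * \<alpha> * V + H3)"
    proof -
      have e1: "2 * (\<alpha>^3 + 3 * \<alpha> * V + H3) = 2 * \<alpha>^3 + 6 * (\<alpha> * V) + 2 * H3" by (simp add: algebra_simps)
      have e2: "4 * \<alpha> * V = 4 * (\<alpha> * V)" by simp
      have "\<alpha> * V \<ge> 0" using a0 V0 by simp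
      then show ?thesis unfolding e1 e2 using H3b by linarith
    qed
    also have "\<dots> \<le> 2 * ((\<Sum>x\<in>G. (g x)^3) / N) + A G g g g" using cube A0 by simp
    finally show ?thesis unfolding N_def .
  next
    case False
    then have "sqrt V \<le> sqrt (\<alpha>\<^sup>2 / 4)" by simp
    also have "sqrt (\<alpha>\<^sup>2 / 4) = \<alpha> / 2" using a0 by (simp add: real_sqrt_divide)
    finally have sV: "sqrt V \<le> \<alpha> / 2" .
    have "V * sqrt V \<le> V * (\<alpha> / 2)" using sV V0 by (rule mult_left_mono)
    then have q1: "A G h h h \<ge> - (V * (\<alpha> / 2))" using Ah by linarith
    have q2: "\<alpha> * V \<ge> 0" using a0 V0 by simp
    have "3 * \<alpha>^3 \<le> 2 * (\<alpha>^3 + 3 * \<alpha> * V + H3) + (\<alpha>^3 + A G h h h)"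
      using q1 q2 H3b by (simp add: algebra_simps)
    then show ?thesis using cube Asplit N_def by simp
  qed
qed

lemma level_lemma: assumes g: "\<And>x. x\<in>G \<Longrightarrow> 0 \<le> g x \<and> g x \<le> 1"
  and m: "(\<Sum>x\<in>G. g x) = real (card G) * \<alpha>" and a: "\<alpha> > 0"
  shows "\<alpha>^3 \<le> 16 * ((\<Sum>x\<in>G. (g x)^3) / real (card G)) * (real (card {x\<in>G. \<alpha>/2 \<le> g x}) / real (card G))\<^sup>2"
proof -
  define N where "N = real (card G)"
  define X where "X = {x\<in>G. \<alpha>/2 \<le> g x}"
  define T where "T = (\<Sum>x\<in>X. g x)"
  define S2 where "S2 = (\<Sum>x\<in>G. (g x)\<^sup>2)"
  define S3 where "S3 = (\<Sum>x\<in>G. (g x)^3)"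
  have Np: "N > 0" using N_pos N_def by simp
  have XG: "X \<subseteq> G" "finite X" using fin by (auto simp: X_def)
  have T1: "N * \<alpha> / 2 \<le> T"
  proof -
    have "(\<Sum>x\<in>G. g x) = T + (\<Sum>x\<in>G - X. g x)" unfolding T_def
      using sum.subset_diff[OF XG(1) fin, of g] by (simp add: add.commute)
    also have "(\<Sum>x\<in>G - X. g x) \<le> (\<Sum>x\<in>G - X. \<alpha> / 2)" by (intro sum_mono) (auto simp: X_def)
    also have "\<dots> \<le> (\<Sum>x\<in>G. \<alpha> / 2)" using a fin by (intro sum_mono2) auto
    also have "\<dots> = N * \<alpha> / 2" by (simp add: N_def)
    finally show ?thesis using m N_def by simp
  qed
  have "0 \<le> N * \<alpha> / 2" using Np a by simp
  then have T0: "T \<ge> 0" using T1 by linarith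
  have T2: "T\<^sup>2 \<le> S2 * real (card X)"
  proof -
    have "(\<Sum>x\<in>X. g x * 1)\<^sup>2 \<le> (\<Sum>x\<in>X. (g x)\<^sup>2) * (\<Sum>x\<in>X. 1\<^sup>2)" by (rule my_CS)
    moreover have "(\<Sum>x\<in>X. (g x)\<^sup>2) \<le> S2" unfolding S2_def using XG fin by (intro sum_mono2) auto
    moreover have "(\<Sum>x\<in>X. (1::real)\<^sup>2) = real (card X)" by simp
    ultimately have "T\<^sup>2 \<le> (\<Sum>x\<in>X. (g x)\<^sup>2) * real (card X)" unfolding T_def by simp
    also have "\<dots> \<le> S2 * real (card X)" using \<open>(\<Sum>x\<in>X. (g x)\<^sup>2) \<le> S2\<close> by (intro mult_right_mono) auto
    finally show ?thesis .
  qed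
  have S2b: "S2\<^sup>2 \<le> S3 * (N * \<alpha>)"
  proof -
    have "(\<Sum>x\<in>G. (g x * sqrt (g x)) * sqrt (g x))\<^sup>2 \<le> (\<Sum>x\<in>G. (g x * sqrt (g x))\<^sup>2) * (\<Sum>x\<in>G. (sqrt (g x))\<^sup>2)"
      by (rule my_CS)
    moreover have "(\<Sum>x\<in>G. (g x * sqrt (g x)) * sqrt (g x)) = S2" unfolding S2_def
    proof (rule sum.cong[OF refl])
      fix x assume "x\<in>G" then have "0 \<le> g x" using g by auto
      then have "sqrt (g x) * sqrt (g x) = g x" by simp
      then show "g x * sqrt (g x) * sqrt (g x) = (g x)\<^sup>2" by (simp add: power2_eq_square mult.assoc)
    qed
    moreover have "(\<Sum>x\<in>G. (g x * sqrt (g x))\<^sup>2) = S3" unfolding S3_def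
    proof (rule sum.cong[OF refl])
      fix x assume "x\<in>G" then have "0 \<le> g x" using g by auto
      then have "(sqrt (g x))\<^sup>2 = g x" by simp
      then show "(g x * sqrt (g x))\<^sup>2 = (g x)^3" by (simp add: power_mult_distrib power2_eq_square power3_eq_cube)
    qed
    moreover have "(\<Sum>x\<in>G. (sqrt (g x))\<^sup>2) = N * \<alpha>"
    proof -
      have "(\<Sum>x\<in>G. (sqrt (g x))\<^sup>2) = (\<Sum>x\<in>G. g x)" by (rule sum.cong[OF refl]) (use g in auto)
      then show ?thesis using m N_def by simp
    qed
    ultimately show ?thesis by simp
  qed
  have S20: "S2 \<ge> 0" unfolding S2_def by (simp add: sum_nonneg)
  have "(N * \<alpha> / 2)^4 \<le> T^4" using T1 Np a by (intro power_mono) auto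
  also have "T^4 = (T\<^sup>2)\<^sup>2" by simp
  also have "\<dots> \<le> (S2 * real (card X))\<^sup>2" using T2 T0 by (intro power_mono) auto
  also have "\<dots> = S2\<^sup>2 * (real (card X))\<^sup>2" by (simp add: power_mult_distrib)
  also have "\<dots> \<le> S3 * (N * \<alpha>) * (real (card X))\<^sup>2" using S2b by (intro mult_right_mono) auto
  finally have ineq: "(N * \<alpha> / 2)^4 \<le> S3 * (N * \<alpha>) * (real (card X))\<^sup>2" .
  have "(N * \<alpha> / 2)^4 = (N * \<alpha>) * (N^3 * \<alpha>^3 / 16)" by (simp add: field_simps power_mult_distrib eval_nat_numeral)
  then have "(N * \<alpha>) * (N^3 * \<alpha>^3 / 16) \<le> (N * \<alpha>) * (S3 * (real (card X))\<^sup>2)" using ineq by (simp add: mult_ac)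
  then have "N^3 * \<alpha>^3 / 16 \<le> S3 * (real (card X))\<^sup>2" using Np a by (simp add: mult_le_cancel_left_pos)
  then have "\<alpha>^3 \<le> 16 * (S3 / N) * (real (card X) / N)\<^sup>2" using Np
    by (simp add: field_simps power2_eq_square power3_eq_cube)
  then show ?thesis unfolding S3_def N_def X_def .
qed

lemma count_lemma: assumes g: "\<And>x. x\<in>G \<Longrightarrow> 0 \<le> g x" and t: "t \<ge> 0"
  shows "t^3 * real (card {(a, d) \<in> G \<times> G. t \<le> g a \<and> t \<le> g (add a d) \<and> t \<le> g (add (add a d) d)}) / (real (card G))\<^sup>2 \<le> A G g g g"
proof -
  define P where "P = {(a, d) \<in> G \<times> G. t \<le> g a \<and> t \<le> g (add a d) \<and> t \<le> g (add (add a d) d)}"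
  have PG: "P \<subseteq> G \<times> G" by (auto simp: P_def)
  have fP: "finite P" using PG fin finite_subset by blast
  have "t^3 * real (card P) = (\<Sum>z\<in>P. t^3)" by simp
  also have "\<dots> \<le> (\<Sum>(x,d)\<in>P. g x * g (add x d) * g (add (add x d) d))"
  proof (rule sum_mono)
    fix z assume "z\<in>P"
    then obtain x d where z: "z = (x,d)" "t \<le> g x" "t \<le> g (add x d)" "t \<le> g (add (add x d) d)" by (auto simp: P_def)
    have "t^3 = t * t * t" by (simp add: power3_eq_cube)
    also have "\<dots> \<le> g x * g (add x d) * g (add (add x d) d)" using z t by (intro mult_mono) auto
    finally show "t^3 \<le> (case z of (x,d) \<Rightarrow> g x * g (add x d) * g (add (add x d) d))" using z by simp
  qed
  also have "\<dots> \<le> (\<Sum>(x,d)\<in>G\<times>G. g x * g (add x d) * g (add (add x d) d))"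
    using PG fin g add_in by (intro sum_mono2) (auto intro!: mult_nonneg_nonneg)
  also have "\<dots> = (\<Sum>x\<in>G. \<Sum>d\<in>G. g x * g (add x d) * g (add (add x d) d))" by (rule sum.cartesian_product[symmetric])
  finally have "t^3 * real (card P) \<le> (\<Sum>x\<in>G. \<Sum>d\<in>G. g x * g (add x d) * g (add (add x d) d))" .
  then show ?thesis unfolding A_def P_def[symmetric] using N_pos by (simp add: power2_eq_square divide_right_mono)
qed

definition Ld :: "('a \<Rightarrow> real) \<Rightarrow> 'a \<Rightarrow> real" where
  "Ld f d = (\<Sum>x\<in>G. f x * f (add x d) * f (add (add x d) d)) / real (card G)"

lemma pick_d: assumes W: "W \<subseteq> G" "zero \<in> W" "card W \<ge> 2" and f: "\<And>x. x\<in>G \<Longrightarrow> 0 \<le> f x \<and> f x \<le> 1"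
  shows "\<exists>d\<in>W. d \<noteq> zero \<and> Ld f d \<ge> A W f f f - 1 / (real (card W) - 1)"
proof (rule ccontr)
  assume "\<not> ?thesis"
  then have lt: "\<And>d. d\<in>W - {zero} \<Longrightarrow> Ld f d < A W f f f - 1 / (real (card W) - 1)" by force
  have fW: "finite W" using W fin finite_subset by blast
  define k where "k = real (card W)"
  have k2: "k \<ge> 2" using W k_def by simp
  have A0: "A W f f f \<ge> 0" using A_nonneg[OF W(1)] f by auto
  have "A W f f f = (\<Sum>d\<in>W. Ld f d) / k"
    unfolding A_def Ld_def k_def by (subst sum.swap) (simp add: sum_divide_distrib[symmetric] divide_divide_eq_left mult.commute)
  have Asum: "(\<Sum>d\<in>W. Ld f d) = k * A W f f f"
    using \<open>A W f f f = (\<Sum>d\<in>W. Ld f d) / k\<close> k2 by simp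
  have L0: "Ld f zero \<le> 1"
  proof -
    have "(\<Sum>x\<in>G. f x * f (add x zero) * f (add (add x zero) zero)) \<le> (\<Sum>x\<in>G. 1)"
      using f add_in zero_in by (intro sum_mono) (auto intro!: mult_le_one)
    then show ?thesis unfolding Ld_def using N_pos by (simp add: divide_le_eq)
  qed
  have "(\<Sum>d\<in>W. Ld f d) = Ld f zero + (\<Sum>d\<in>W - {zero}. Ld f d)"
    using sum.remove[OF fW W(2)] by simp
  also have "(\<Sum>d\<in>W - {zero}. Ld f d) < (\<Sum>d\<in>W - {zero}. A W f f f - 1 / (real (card W) - 1))"
  proof (rule sum_strict_mono)
    show "finite (W - {zero})" using fW by simp
    show "W - {zero} \<noteq> {}"
    proof
      assume "W - {zero} = {}"
      then have "W = {zero}" using W(2) by auto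
      then show False using W(3) by simp
    qed
  qed (rule lt)
  also have "\<dots> = (k - 1) * A W f f f - 1" using W fW k2 unfolding k_def by (simp add: card_Diff_singleton field_simps)
  finally have "k * A W f f f < 1 + ((k - 1) * A W f f f - 1)" using Asum L0 by linarith
  then show False using A0 by (simp add: algebra_simps)
qed

end


definition vneg :: "nat \<Rightarrow> nat \<Rightarrow> (nat \<Rightarrow> nat) \<Rightarrow> (nat \<Rightarrow> nat)" where
  "vneg p n x = (\<lambda>i\<in>{..<n}. (p - x i) mod p)"

definition ee :: "nat \<Rightarrow> nat \<Rightarrow> complex" where
  "ee p a = cis (2 * pi * real a / real p)"

definition chiF :: "nat \<Rightarrow> nat \<Rightarrow> (nat \<Rightarrow> nat) \<Rightarrow> (nat \<Rightarrow> nat) \<Rightarrow> complex" where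
  "chiF p n r x = ee p (\<Sum>i<n. r i * x i)"

lemma ee_add: "ee p (a + b) = ee p a * ee p b"
  unfolding ee_def by (simp add: cis_mult add_divide_distrib distrib_left)

lemma ee_mod: assumes p: "p > 0" shows "ee p a = ee p (a mod p)"
proof -
  have "a = (a div p) * p + a mod p" by simp
  then have "ee p a = ee p ((a div p) * p) * ee p (a mod p)" by (metis ee_add)
  moreover have "ee p ((a div p) * p) = 1"
  proof -
    have "2 * pi * real ((a div p) * p) / real p = 2 * pi * real (a div p)" using p by simp
    then show ?thesis unfolding ee_def by simp
  qed
  ultimately show ?thesis by simp
qed

lemma ee_0[simp]: "ee p 0 = 1" by (simp add: ee_def)

lemma ee_sum: "finite I \<Longrightarrow> ee p (\<Sum>i\<in>I. f i) = (\<Prod>i\<in>I. ee p (f i))"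
  by (induction I rule: finite_induct) (auto simp: ee_add)

lemma ee_pow: "ee p (r * j) = ee p r ^ j"
  unfolding ee_def DeMoivre by (simp add: mult_ac)

lemma ee_norm: "cmod (ee p a) = 1" by (simp add: ee_def)

lemma Fpn_iff: "x \<in> Fpn p n \<longleftrightarrow> (\<forall>i<n. x i < p) \<and> x \<in> extensional {..<n}"
  unfolding Fpn_def PiE_iff by auto

lemma Fpn_eqI: "x \<in> Fpn p n \<Longrightarrow> y \<in> Fpn p n \<Longrightarrow> (\<And>i. i < n \<Longrightarrow> x i = y i) \<Longrightarrow> x = y"
  unfolding Fpn_iff by (metis extensionalityI lessThan_iff)

lemma vadd_in: "p > 0 \<Longrightarrow> vadd p n x y \<in> Fpn p n"
  unfolding Fpn_iff vadd_def by auto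

lemma vneg_in: "p > 0 \<Longrightarrow> vneg p n x \<in> Fpn p n"
  unfolding Fpn_iff vneg_def by auto

lemma vzero_in: "p > 0 \<Longrightarrow> vzero n \<in> Fpn p n"
  unfolding Fpn_iff vzero_def by auto

lemma vadd_app: "i < n \<Longrightarrow> vadd p n x y i = (x i + y i) mod p" by (simp add: vadd_def)

lemma iter_vadd: "p > 0 \<Longrightarrow> (vadd p n x ^^ k) (vzero n) = (\<lambda>i\<in>{..<n}. (k * x i) mod p)"
proof (induction k)
  case 0 then show ?case by (simp add: vzero_def)
next
  case (Suc k)
  show ?case using Suc by (auto simp: vadd_def mod_add_right_eq)
qed

lemma dbl_inj: fixes p a b :: nat assumes p: "prime p" "odd p" and a: "a < p" "b < p" and e: "(a + a) mod p = (b + b) mod p"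
  shows "a = b"
proof -
  have "p \<ge> 2" using p prime_ge_2_nat by blast
  moreover have "p \<noteq> 2" using p by auto
  ultimately have p2: "p > 2" by simp
  have "\<not> p dvd 2" using p2 by (simp add: nat_dvd_not_less)
  have main: "x = y" if xy: "y \<le> x" "x < p" "(x + x) mod p = (y + y) mod p" for x y
  proof -
    have "p dvd (x + x) - (y + y)" using xy by (simp add: mod_eq_dvd_iff_nat)
    moreover have "x + x - (y + y) = 2 * (x - y)" by simp
    ultimately have "p dvd 2 * (x - y)" by simp
    then have "p dvd (x - y)" using \<open>\<not> p dvd 2\<close> p(1) by (simp add: prime_dvd_mult_iff)
    moreover have "x - y < p" using xy by simp
    ultimately show ?thesis using xy by (metis dvd_imp_le le_antisym less_le_not_le nat_less_le not_gr0 zero_less_diff diff_is_0_eq)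
  qed
  show ?thesis
  proof (cases "b \<le> a")
    case True then show ?thesis using main a e by blast
  next
    case False then show ?thesis using main[of a b] a e by simp
  qed
qed


lemma chiF_add: assumes p: "p > 0"
  shows "chiF p n r (vadd p n x y) = chiF p n r x * chiF p n r y"
proof -
  have "(\<Sum>i<n. r i * vadd p n x y i) mod p = (\<Sum>i<n. r i * (x i + y i)) mod p"
  proof -
    have "(\<Sum>i<n. r i * vadd p n x y i) mod p = (\<Sum>i<n. (r i * vadd p n x y i) mod p) mod p"
      by (simp add: mod_sum_eq)
    also have "(\<Sum>i<n. (r i * vadd p n x y i) mod p) = (\<Sum>i<n. (r i * (x i + y i)) mod p)"
      by (intro sum.cong refl) (simp add: vadd_app mod_mult_right_eq)
    also have "(\<Sum>i<n. (r i * (x i + y i)) mod p) mod p = (\<Sum>i<n. r i * (x i + y i)) mod p"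
      by (simp add: mod_sum_eq)
    finally show ?thesis .
  qed
  then have "chiF p n r (vadd p n x y) = ee p (\<Sum>i<n. r i * (x i + y i))"
    unfolding chiF_def using ee_mod[OF p] by metis
  also have "\<dots> = ee p ((\<Sum>i<n. r i * x i) + (\<Sum>i<n. r i * y i))"
    by (simp add: distrib_left sum.distrib)
  finally show ?thesis by (simp add: ee_add chiF_def)
qed

lemma geo_zero: assumes p: "p > 0" and r: "0 < r" "r < p"
  shows "(\<Sum>j<p. ee p (r * j)) = 0"
proof -
  define z where "z = ee p r"
  have zp: "z ^ p = 1"
  proof -
    have "z ^ p = ee p (r * p)" by (simp add: z_def ee_pow)
    also have "\<dots> = ee p 0" using ee_mod[OF p, of "r * p"] by simp
    finally show ?thesis by simp
  qed
  have z1: "z \<noteq> 1"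
  proof
    assume "z = 1"
    then have "Re z = 1" by simp
    then have "cos (2 * pi * real r / real p) = 1" unfolding z_def ee_def by simp
    then obtain k :: int where k: "2 * pi * real r / real p = real_of_int k * 2 * pi"
      using cos_one_2pi_int by blast
    then have "(2 * pi) * (real r / real p) = (2 * pi) * real_of_int k" by (simp add: mult_ac)
    then have "real r / real p = real_of_int k" using pi_gt_zero by (metis mult_cancel_left pi_neq_zero zero_neq_numeral mult_eq_0_iff)
    moreover have "0 < real r / real p" "real r / real p < 1" using r p by auto
    ultimately have "0 < real_of_int k" "real_of_int k < 1" by auto
    then have "0 < k" "k < 1" by simp_all
    then show False by simp
  qed
  have "(\<Sum>j<p. ee p (r * j)) = (\<Sum>j<p. z ^ j)" by (simp add: z_def ee_pow)
  also have "\<dots> = (z ^ p - 1) / (z - 1)" using geometric_sum[OF z1] by simp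
  also have "\<dots> = 0" using zp by simp
  finally show ?thesis .
qed

lemma chiF_sum: assumes p: "p > 0" and r: "r \<in> Fpn p n" "r \<noteq> vzero n"
  shows "(\<Sum>x\<in>Fpn p n. chiF p n r x) = 0"
proof -
  obtain i0 where i0: "i0 < n" "r i0 \<noteq> 0"
  proof (rule ccontr)
    assume "\<not> thesis"
    then have "\<And>i. i < n \<Longrightarrow> r i = 0" using that by blast
    then have "r = vzero n" using Fpn_eqI[OF r(1) vzero_in[OF p]] by (simp add: vzero_def)
    then show False using r by simp
  qed
  have ri0: "r i0 < p" using r(1) i0 by (simp add: Fpn_iff)
  have "(\<Sum>x\<in>Fpn p n. chiF p n r x) = (\<Sum>x\<in>Fpn p n. \<Prod>i<n. ee p (r i * x i))"
    unfolding chiF_def by (simp add: ee_sum)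
  also have "\<dots> = (\<Prod>i<n. \<Sum>j<p. ee p (r i * j))"
    unfolding Fpn_def by (rule prod_sum_PiE[symmetric]) auto
  also have "\<dots> = 0"
    using geo_zero[OF p _ ri0] i0 by (subst prod_zero_iff) auto
  finally show ?thesis .
qed

lemma fgrp_Fpn: fixes p n :: nat assumes pr: "prime p" and od: "odd p"
  shows "fgrp (Fpn p n) (vadd p n) (vzero n) (vneg p n) (chiF p n) p"
proof -
  have p1: "p > 1" using pr prime_gt_1_nat by blast
  then have p0: "p > 0" by simp
  show ?thesis
  proof (unfold_locales)
    show "finite (Fpn p n)" unfolding Fpn_def by (simp add: finite_PiE)
    show "vzero n \<in> Fpn p n" using vzero_in[OF p0] .
    show "vadd p n x y \<in> Fpn p n" for x y using vadd_in[OF p0] .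
    show "vneg p n x \<in> Fpn p n" for x using vneg_in[OF p0] .
    show "vadd p n (vadd p n x y) z = vadd p n x (vadd p n y z)" for x y z
      by (rule Fpn_eqI[OF vadd_in[OF p0] vadd_in[OF p0]]) (simp add: vadd_app mod_add_left_eq mod_add_right_eq add.assoc)
    show "vadd p n x y = vadd p n y x" for x y
      by (rule Fpn_eqI[OF vadd_in[OF p0] vadd_in[OF p0]]) (simp add: vadd_app add.commute)
    show "vadd p n (vzero n) x = x" if "x \<in> Fpn p n" for x
      by (rule Fpn_eqI[OF vadd_in[OF p0] that]) (use that in \<open>simp add: vadd_app vzero_def Fpn_iff\<close>)
    show "vadd p n x (vneg p n x) = vzero n" if "x \<in> Fpn p n" for x
    proof (rule Fpn_eqI[OF vadd_in[OF p0] vzero_in[OF p0]])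
      fix i assume i: "i < n"
      have "x i < p" using that i by (simp add: Fpn_iff)
      then have "(x i + (p - x i) mod p) mod p = 0" by (simp add: mod_add_right_eq)
      then show "vadd p n x (vneg p n x) i = vzero n i" using i by (simp add: vadd_app vneg_def vzero_def)
    qed
    show "1 < p" using p1 .
    show "(vadd p n x ^^ p) (vzero n) = vzero n" if "x \<in> Fpn p n" for x
    proof -
      have "(vadd p n x ^^ p) (vzero n) = (\<lambda>i\<in>{..<n}. (p * x i) mod p)" by (rule iter_vadd[OF p0])
      also have "\<dots> = vzero n" by (simp add: vzero_def)
      finally show ?thesis .
    qed
    show "bij_betw (\<lambda>x. vadd p n x x) (Fpn p n) (Fpn p n)"
    proof -
      have inj: "inj_on (\<lambda>x. vadd p n x x) (Fpn p n)"
      proof (rule inj_onI)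
        fix x y assume xy: "x \<in> Fpn p n" "y \<in> Fpn p n" "vadd p n x x = vadd p n y y"
        show "x = y"
        proof (rule Fpn_eqI[OF xy(1,2)])
          fix i assume i: "i < n"
          have "(x i + x i) mod p = (y i + y i) mod p" using xy(3) i by (metis vadd_app)
          then show "x i = y i" using dbl_inj[OF pr od] xy i by (simp add: Fpn_iff)
        qed
      qed
      have sub: "(\<lambda>x. vadd p n x x) ` Fpn p n \<subseteq> Fpn p n" using vadd_in[OF p0] by auto
      have fin: "finite (Fpn p n)" unfolding Fpn_def by (simp add: finite_PiE)
      have "(\<lambda>x. vadd p n x x) ` Fpn p n = Fpn p n"
        using card_subset_eq[OF fin sub] card_image[OF inj] by simp
      then show ?thesis using inj by (simp add: bij_betw_def)
    qed
    show "chiF p n r (vadd p n x y) = chiF p n r x * chiF p n r y" for r x y using chiF_add[OF p0] .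
    show "chiF p n r x = chiF p n x r" for r x unfolding chiF_def by (simp add: mult.commute)
    show "cmod (chiF p n r x) = 1" for r x by (simp add: chiF_def ee_norm)
    show "(\<Sum>x\<in>Fpn p n. chiF p n r x) = 0" if "r \<in> Fpn p n" "r \<noteq> vzero n" for r using chiF_sum[OF p0 that] .
  qed
qed


lemma final_real: fixes a M mu b C :: real
  assumes a0: "a > 0" and b0: "b > 0" and C: "C \<ge> 1" and big: "a > 2 powr (8 + 8*C) * b"
    and lev: "a \<le> 16 * M * mu\<^sup>2" and cnt: "a * mu powr C \<le> 16 * b" and mu0: "mu \<ge> 0"
  shows "(a / b) powr (1 / (2*C)) * a \<le> M"
proof -
  have mup: "mu > 0"
  proof (rule ccontr)
    assume "\<not> mu > 0" then have "mu = 0" using mu0 by simp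
    then show False using lev a0 by simp
  qed
  have Mp: "M > 0"
  proof (rule ccontr)
    assume "\<not> M > 0" then have "16 * M * mu\<^sup>2 \<le> 0" by (simp add: mult_nonpos_nonneg)
    then show False using lev a0 by simp
  qed
  define R where "R = a / b"
  have l16: "ln (16::real) = 4 * ln 2"
  proof -
    have "ln ((2::real)^4) = real 4 * ln 2" by (rule ln_realpow)
    then show ?thesis by simp
  qed
  have Rp: "R > 0" using a0 b0 R_def by simp
  define l where "l = ln R"
  define m where "m = ln mu"
  define L2 where "L2 = ln (2::real)"
  have L2p: "L2 > 0" unfolding L2_def by simp
  have hl: "l > (8 + 8*C) * L2"
  proof -
    have "2 powr (8 + 8*C) < R" using big b0 unfolding R_def by (simp add: pos_less_divide_eq)
    then have "ln (2 powr (8 + 8*C)) < ln R" using Rp ln_less_cancel_iff[of "2 powr (8 + 8*C)" R] by simp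
    moreover have "ln (2 powr (8 + 8*C)) = (8 + 8*C) * ln 2" by (rule ln_powr) 
    ultimately show ?thesis unfolding l_def L2_def by simp
  qed
  have hm: "C * m \<le> 4 * L2 - l"
  proof -
    have "mu powr C \<le> 16 / R" using cnt a0 b0 unfolding R_def by (simp add: field_simps)
    then have "ln (mu powr C) \<le> ln (16 / R)" using mup Rp ln_le_cancel_iff[of "mu powr C" "16 / R"] by simp
    moreover have "ln (mu powr C) = C * m" unfolding m_def by (rule ln_powr)
    moreover have "ln (16 / R) = 4 * L2 - l" using Rp l16 unfolding l_def L2_def
      by (simp add: ln_div)
    ultimately show ?thesis by linarith
  qed
  have hM: "ln a \<le> 4 * L2 + ln M + 2 * m"
  proof -
    have "ln a \<le> ln (16 * M * mu\<^sup>2)" using lev a0 Mp mup ln_le_cancel_iff[of a "16 * M * mu\<^sup>2"] by simp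
    also have "\<dots> = ln 16 + ln M + 2 * m" using Mp mup unfolding m_def by (simp add: ln_mult ln_realpow)
    also have "ln (16::real) = 4 * L2" unfolding L2_def by (rule l16)
    finally show ?thesis .
  qed
  have Cp: "C > 0" using C by simp
  have hm2: "m \<le> (4 * L2 - l) / C" using hm Cp by (simp add: pos_le_divide_eq mult.commute)
  have key: "l / (2*C) + 4 * L2 + 2 * ((4 * L2 - l) / C) \<le> 0"
  proof -
    have e: "(l / (2*C) + 4 * L2 + 2 * ((4 * L2 - l) / C)) * (2*C) = 8 * (C * L2) + 16 * L2 - 3 * l"
      using Cp by (simp add: field_simps)
    have "(8 + 8*C) * L2 = 8 * L2 + 8 * (C * L2)" by (simp add: algebra_simps)
    moreover have "C * L2 \<ge> 0" using Cp L2p by simp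
    ultimately have "8 * (C * L2) + 16 * L2 - 3 * l \<le> 0" using hl L2p by linarith
    then have "(l / (2*C) + 4 * L2 + 2 * ((4 * L2 - l) / C)) * (2*C) \<le> 0" using e by simp
    then show ?thesis using Cp by (simp add: mult_le_0_iff)
  qed
  have "ln ((a / b) powr (1 / (2*C)) * a) = l / (2*C) + ln a"
    using Rp a0 b0 unfolding l_def R_def by (simp add: ln_mult ln_powr)
  also have "\<dots> \<le> ln M" using key hM hm2 by linarith
  finally have "ln ((a / b) powr (1 / (2*C)) * a) \<le> ln M" .
  moreover have "(a / b) powr (1 / (2*C)) * a > 0" using a0 b0 by simp
  ultimately show ?thesis using Mp ln_le_cancel_iff[of "(a / b) powr (1 / (2*C)) * a" M] by simp
qed


definition AP3 :: "nat \<Rightarrow> nat \<Rightarrow> ((nat \<Rightarrow> nat) \<Rightarrow> real) \<Rightarrow> real" where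
  "AP3 p n f = avg (Fpn p n \<times> Fpn p n) (\<lambda>(x, d). f x * f (vadd p n x d) * f (vadd p n (vadd p n x d) d))"

definition APd :: "nat \<Rightarrow> nat \<Rightarrow> ((nat \<Rightarrow> nat) \<Rightarrow> real) \<Rightarrow> (nat \<Rightarrow> nat) \<Rightarrow> real" where
  "APd p n f d = avg (Fpn p n) (\<lambda>x. f x * f (vadd p n x d) * f (vadd p n (vadd p n x d) d))"

lemma card_Fpn: "card (Fpn p n) = p ^ n"
  unfolding Fpn_def by (simp add: card_PiE)

lemma core:
  fixes p n :: nat and f :: "(nat \<Rightarrow> nat) \<Rightarrow> real" and \<epsilon> :: real
  assumes pr: "prime p" and od: "odd p" and e: "\<epsilon> > 0"
    and f: "\<forall>x\<in>Fpn p n. 0 \<le> f x \<and> f x \<le> 1"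
    and big: "real (Kb p \<epsilon>) * (2 + 1/\<epsilon>) \<le> real p ^ n"
  obtains g where
    "AP3 p n g \<le> AP3 p n f + \<epsilon>"
    "\<exists>d\<in>Fpn p n. d \<noteq> vzero n \<and> APd p n f d \<ge> avg (Fpn p n) (\<lambda>x. (g x)^3) - 2 * \<epsilon>"
    "3 * (avg (Fpn p n) f)^3 \<le> 2 * avg (Fpn p n) (\<lambda>x. (g x)^3) + AP3 p n g"
    "avg (Fpn p n) f > 0 \<Longrightarrow> (avg (Fpn p n) f)^3 \<le> 16 * avg (Fpn p n) (\<lambda>x. (g x)^3) * (real (card {x\<in>Fpn p n. avg (Fpn p n) f / 2 \<le> g x}) / real p ^ n)\<^sup>2"
    "(avg (Fpn p n) f / 2)^3 * real (card {(a, d) \<in> Fpn p n \<times> Fpn p n. a \<in> {x\<in>Fpn p n. avg (Fpn p n) f / 2 \<le> g x} \<and> vadd p n a d \<in> {x\<in>Fpn p n. avg (Fpn p n) f / 2 \<le> g x} \<and> vadd p n (vadd p n a d) d \<in> {x\<in>Fpn p n. avg (Fpn p n) f / 2 \<le> g x}}) / (real p ^ n)\<^sup>2 \<le> AP3 p n g"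
proof -
  interpret fgrp "Fpn p n" "vadd p n" "vzero n" "vneg p n" "chiF p n" p by (rule fgrp_Fpn[OF pr od])
  let ?G = "Fpn p n"
  define N where "N = real (card ?G)"
  have NN: "N = real p ^ n" unfolding N_def card_Fpn by simp
  have Np: "N > 0" using N_pos N_def by simp
  have f': "\<And>y. y \<in> ?G \<Longrightarrow> 0 \<le> f y \<and> f y \<le> 1" using f by auto
  have AP3A: "AP3 p n h = A ?G h h h" for h
  proof -
    have "(\<Sum>z\<in>?G \<times> ?G. (\<lambda>(x, d). h x * h (vadd p n x d) * h (vadd p n (vadd p n x d) d)) z)
        = (\<Sum>x\<in>?G. \<Sum>d\<in>?G. h x * h (vadd p n x d) * h (vadd p n (vadd p n x d) d))"
      by (rule sum.cartesian_product[symmetric])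
    then show ?thesis unfolding AP3_def A_def avg_def by (simp add: card_cartesian_product)
  qed
  have APdL: "APd p n h d = Ld h d" for h d unfolding APd_def Ld_def avg_def ..
  obtain L where L: "set L \<subseteq> ?G" "card (span L) \<le> Kb p \<epsilon>"
    "\<bar>A ?G f f f - A ?G (Pr L f) (Pr L f) (Pr L f)\<bar> \<le> \<epsilon>"
    "\<bar>A (Ann L) f f f - A (Ann L) (Pr L f) (Pr L f) (Pr L f)\<bar> \<le> \<epsilon>"
    using regularity[where f=f and \<epsilon>=\<epsilon>, OF e f'] by blast
  define g where "g = Pr L f"
  define \<alpha> where "\<alpha> = avg ?G f"
  define M where "M = avg ?G (\<lambda>x. (g x)^3)"
  have g01: "\<And>x. x\<in>?G \<Longrightarrow> 0 \<le> g x \<and> g x \<le> 1" using Pr_bounds[where f=f, OF L(1) _ f'] g_def by auto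
  have sg: "(\<Sum>x\<in>?G. g x) = N * \<alpha>" using Pr_sum[OF L(1), of f] Np unfolding g_def \<alpha>_def avg_def N_def by simp
  have a0: "\<alpha> \<ge> 0" unfolding \<alpha>_def avg_def using f' by (simp add: sum_nonneg)
  define W where "W = Ann L"
  have cd: "card (span L) * card W = card ?G" using card_dual[OF L(1)] W_def by simp
  have cs1: "card (span L) \<ge> 1" using zero_span finite_span by (metis One_nat_def Suc_leI card_gt_0_iff empty_iff)
  have Kpos: "real (Kb p \<epsilon>) \<ge> 1" using L(2) cs1 by linarith
  have cW: "real (card W) \<ge> 2 + 1/\<epsilon>"
  proof -
    have "real (card (span L)) * real (card W) = N" using cd N_def by (metis of_nat_mult)
    then have "real (card W) = N / real (card (span L))" using cs1 by (simp add: field_simps)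
    also have "\<dots> \<ge> N / real (Kb p \<epsilon>)" using L(2) cs1 Np by (intro divide_left_mono) auto
    finally have "real (card W) \<ge> N / real (Kb p \<epsilon>)" .
    moreover have "N / real (Kb p \<epsilon>) \<ge> 2 + 1/\<epsilon>" using big Kpos NN by (simp add: pos_le_divide_eq mult.commute)
    ultimately show ?thesis by linarith
  qed
  have "1/\<epsilon> > 0" using e by simp
  then have "real (card W) \<ge> 2" using cW by linarith
  then have cW2: "card W \<ge> 2" by linarith
  have cWe: "1 / (real (card W) - 1) \<le> \<epsilon>"
  proof -
    have "real (card W) - 1 \<ge> 1/\<epsilon>" using cW by simp
    moreover have "0 < 1/\<epsilon>" using e by simp
    ultimately have "0 < (real (card W) - 1) * (1/\<epsilon>)" by (intro mult_pos_pos) linarith+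
    then have "1 / (real (card W) - 1) \<le> 1 / (1/\<epsilon>)" using \<open>real (card W) - 1 \<ge> 1/\<epsilon>\<close>
      by (intro divide_left_mono) auto
    then show ?thesis by simp
  qed
  obtain d where d: "d \<in> W" "d \<noteq> vzero n" "Ld f d \<ge> A W f f f - 1 / (real (card W) - 1)"
    using pick_d[where f=f, OF _ _ cW2 f'] Ann_sub zero_Ann[OF L(1)] W_def by blast
  have Winv: "A W g g g = (\<Sum>x\<in>?G. (g x)^3) / N"
    unfolding W_def N_def using A_inv[of "Ann L" g] Ann_sub cA_pos[OF L(1)] Pr_shift[OF L(1)] g_def by simp
  have Md: "APd p n f d \<ge> M - 2 * \<epsilon>"
  proof -
    have "A W f f f \<ge> A W g g g - \<epsilon>" using L(4) unfolding W_def g_def by linarith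
    moreover have "A W g g g = M" using Winv unfolding M_def avg_def N_def by simp
    ultimately show ?thesis using d(3) cWe APdL[of f d] by linarith
  qed
  have dG: "d \<in> ?G" using d(1) Ann_sub W_def by auto
  show ?thesis
  proof (rule that[of g])
    show "AP3 p n g \<le> AP3 p n f + \<epsilon>" using L(3) AP3A g_def by (simp add: abs_le_iff)
    show "\<exists>d\<in>?G. d \<noteq> vzero n \<and> APd p n f d \<ge> avg ?G (\<lambda>x. (g x)^3) - 2 * \<epsilon>"
      using dG d(2) Md M_def by blast
    show "3 * (avg ?G f)^3 \<le> 2 * avg ?G (\<lambda>x. (g x)^3) + AP3 p n g"
      using key_ineq[where g=g and \<alpha>=\<alpha>, OF g01 sg[unfolded N_def]] unfolding AP3A avg_def \<alpha>_def by simp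
    show "(avg ?G f)^3 \<le> 16 * avg ?G (\<lambda>x. (g x)^3) * (real (card {x\<in>?G. avg ?G f / 2 \<le> g x}) / real p ^ n)\<^sup>2"
      if "avg ?G f > 0"
      using level_lemma[where g=g and \<alpha>=\<alpha>, OF g01 sg[unfolded N_def]] that NN N_def unfolding avg_def \<alpha>_def by simp
    have Pe: "{(a, d) \<in> ?G \<times> ?G. a \<in> {x\<in>?G. \<alpha>/2 \<le> g x} \<and> vadd p n a d \<in> {x\<in>?G. \<alpha>/2 \<le> g x} \<and> vadd p n (vadd p n a d) d \<in> {x\<in>?G. \<alpha>/2 \<le> g x}}
       = {(a, d) \<in> ?G \<times> ?G. \<alpha>/2 \<le> g a \<and> \<alpha>/2 \<le> g (vadd p n a d) \<and> \<alpha>/2 \<le> g (vadd p n (vadd p n a d) d)}"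
      using add_in by auto
    show "(avg ?G f / 2)^3 * real (card {(a, d) \<in> ?G \<times> ?G. a \<in> {x\<in>?G. avg ?G f / 2 \<le> g x} \<and> vadd p n a d \<in> {x\<in>?G. avg ?G f / 2 \<le> g x} \<and> vadd p n (vadd p n a d) d \<in> {x\<in>?G. avg ?G f / 2 \<le> g x}}) / (real p ^ n)\<^sup>2 \<le> AP3 p n g"
      using count_lemma[where g=g and t="\<alpha>/2"] g01 a0 Pe NN N_def unfolding AP3A \<alpha>_def by simp
  qed
qed


lemma incr_generic:
  fixes p :: nat and \<alpha> \<beta> \<gamma> :: real
  assumes pr: "prime p" and od: "odd p" and gam: "\<gamma> > \<alpha>^3"
  and H: "\<And>\<delta>. \<delta> > 0 \<Longrightarrow> \<exists>\<epsilon>>0. \<forall>n::nat. \<forall>g :: (nat \<Rightarrow> nat) \<Rightarrow> real. n \<ge> 1 \<longrightarrow>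
       AP3 p n g \<le> \<beta> + \<epsilon> \<longrightarrow>
       3 * \<alpha>^3 \<le> 2 * avg (Fpn p n) (\<lambda>x. (g x)^3) + AP3 p n g \<longrightarrow>
       (\<alpha> > 0 \<longrightarrow> \<alpha>^3 \<le> 16 * avg (Fpn p n) (\<lambda>x. (g x)^3) * (real (card {x\<in>Fpn p n. \<alpha> / 2 \<le> g x}) / real p ^ n)\<^sup>2) \<longrightarrow>
       (\<alpha> / 2)^3 * real (card {(a, d) \<in> Fpn p n \<times> Fpn p n. a \<in> {x\<in>Fpn p n. \<alpha> / 2 \<le> g x} \<and> vadd p n a d \<in> {x\<in>Fpn p n. \<alpha> / 2 \<le> g x} \<and> vadd p n (vadd p n a d) d \<in> {x\<in>Fpn p n. \<alpha> / 2 \<le> g x}}) / (real p ^ n)\<^sup>2 \<le> AP3 p n g \<longrightarrow>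
       avg (Fpn p n) (\<lambda>x. (g x)^3) - 2 * \<epsilon> \<ge> \<gamma> - \<delta>"
  shows "increment_conclusion p \<alpha> \<beta> \<gamma>"
  unfolding increment_conclusion_def
proof (intro conjI gam allI impI)
  fix \<delta> :: real assume dp: "\<delta> > 0"
  obtain \<epsilon> where e: "\<epsilon> > 0" and He: "\<forall>n::nat. \<forall>g :: (nat \<Rightarrow> nat) \<Rightarrow> real. n \<ge> 1 \<longrightarrow>
       AP3 p n g \<le> \<beta> + \<epsilon> \<longrightarrow>
       3 * \<alpha>^3 \<le> 2 * avg (Fpn p n) (\<lambda>x. (g x)^3) + AP3 p n g \<longrightarrow>
       (\<alpha> > 0 \<longrightarrow> \<alpha>^3 \<le> 16 * avg (Fpn p n) (\<lambda>x. (g x)^3) * (real (card {x\<in>Fpn p n. \<alpha> / 2 \<le> g x}) / real p ^ n)\<^sup>2) \<longrightarrow>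
       (\<alpha> / 2)^3 * real (card {(a, d) \<in> Fpn p n \<times> Fpn p n. a \<in> {x\<in>Fpn p n. \<alpha> / 2 \<le> g x} \<and> vadd p n a d \<in> {x\<in>Fpn p n. \<alpha> / 2 \<le> g x} \<and> vadd p n (vadd p n a d) d \<in> {x\<in>Fpn p n. \<alpha> / 2 \<le> g x}}) / (real p ^ n)\<^sup>2 \<le> AP3 p n g \<longrightarrow>
       avg (Fpn p n) (\<lambda>x. (g x)^3) - 2 * \<epsilon> \<ge> \<gamma> - \<delta>"
    using H[OF dp] by blast
  define n' where "n' = nat \<lceil>real (Kb p \<epsilon>) * (2 + 1/\<epsilon>)\<rceil>"
  show "\<exists>n'. \<forall>n>n'. \<forall>f. (\<forall>x\<in>Fpn p n. 0 \<le> f x \<and> f x \<le> 1) \<and> avg (Fpn p n) f = \<alpha> \<and>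
        avg (Fpn p n \<times> Fpn p n) (\<lambda>(x, d). f x * f (vadd p n x d) * f (vadd p n (vadd p n x d) d)) \<le> \<beta> \<longrightarrow>
        (\<exists>d\<in>Fpn p n. d \<noteq> vzero n \<and> \<gamma> - \<delta> \<le> avg (Fpn p n) (\<lambda>x. f x * f (vadd p n x d) * f (vadd p n (vadd p n x d) d)))"
  proof (intro exI[of _ n'] allI impI)
    fix n :: nat and f :: "(nat \<Rightarrow> nat) \<Rightarrow> real"
    assume n: "n' < n"
    assume hf: "(\<forall>x\<in>Fpn p n. 0 \<le> f x \<and> f x \<le> 1) \<and> avg (Fpn p n) f = \<alpha> \<and>
        avg (Fpn p n \<times> Fpn p n) (\<lambda>(x, d). f x * f (vadd p n x d) * f (vadd p n (vadd p n x d) d)) \<le> \<beta>"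
    then have f01: "\<forall>x\<in>Fpn p n. 0 \<le> f x \<and> f x \<le> 1" and fa: "avg (Fpn p n) f = \<alpha>" and fb: "AP3 p n f \<le> \<beta>"
      unfolding AP3_def by auto
    have p2: "p \<ge> 2" using pr prime_ge_2_nat by blast
    have n1: "n \<ge> 1" using n by simp
    have big: "real (Kb p \<epsilon>) * (2 + 1/\<epsilon>) \<le> real p ^ n"
    proof -
      have "real (Kb p \<epsilon>) * (2 + 1/\<epsilon>) \<le> real n'" unfolding n'_def by linarith
      also have "\<dots> \<le> real n" using n by simp
      also have "real n \<le> real (2 ^ n)" using less_exp[of n] by linarith
      also have "\<dots> = 2 ^ n" by simp
      also have "\<dots> \<le> real p ^ n" using p2 by (intro power_mono) auto
      finally show ?thesis .
    qed
    obtain g where g1: "AP3 p n g \<le> AP3 p n f + \<epsilon>"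
      and g2: "\<exists>d\<in>Fpn p n. d \<noteq> vzero n \<and> APd p n f d \<ge> avg (Fpn p n) (\<lambda>x. (g x)^3) - 2 * \<epsilon>"
      and g3: "3 * (avg (Fpn p n) f)^3 \<le> 2 * avg (Fpn p n) (\<lambda>x. (g x)^3) + AP3 p n g"
      and g4: "avg (Fpn p n) f > 0 \<Longrightarrow> (avg (Fpn p n) f)^3 \<le> 16 * avg (Fpn p n) (\<lambda>x. (g x)^3) * (real (card {x\<in>Fpn p n. avg (Fpn p n) f / 2 \<le> g x}) / real p ^ n)\<^sup>2"
      and g5: "(avg (Fpn p n) f / 2)^3 * real (card {(a, d) \<in> Fpn p n \<times> Fpn p n. a \<in> {x\<in>Fpn p n. avg (Fpn p n) f / 2 \<le> g x} \<and> vadd p n a d \<in> {x\<in>Fpn p n. avg (Fpn p n) f / 2 \<le> g x} \<and> vadd p n (vadd p n a d) d \<in> {x\<in>Fpn p n. avg (Fpn p n) f / 2 \<le> g x}}) / (real p ^ n)\<^sup>2 \<le> AP3 p n g"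
      using core[OF pr od e f01 big] by blast
    have "avg (Fpn p n) (\<lambda>x. (g x)^3) - 2 * \<epsilon> \<ge> \<gamma> - \<delta>"
      using He n1 g1 fb g3 g4 g5 unfolding fa by auto
    then obtain d where "d \<in> Fpn p n" "d \<noteq> vzero n" "APd p n f d \<ge> \<gamma> - \<delta>" using g2 by force
    then show "\<exists>d\<in>Fpn p n. d \<noteq> vzero n \<and> \<gamma> - \<delta> \<le> avg (Fpn p n) (\<lambda>x. f x * f (vadd p n x d) * f (vadd p n (vadd p n x d) d))"
      unfolding APd_def by blast
  qed
qed

theorem mainTheorem16:
  fixes p :: nat and \<alpha> \<beta> :: real
  assumes "prime p" and "odd p"
    and "0 < \<alpha>" and "\<alpha> \<le> 1"
    and "\<beta> < \<alpha> ^ 3"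
  shows "increment_conclusion p \<alpha> \<beta> (\<alpha> ^ 3 + (\<alpha> ^ 3 - \<beta>) / 2) \<and>
         (\<forall>C. AP_constant p C \<and> 0 < \<beta> \<and> \<alpha> ^ 3 > 2 powr (8 + 8 * C) * \<beta> \<longrightarrow>
              increment_conclusion p \<alpha> \<beta> ((\<alpha> ^ 3 / \<beta>) powr (1 / (2 * C)) * \<alpha> ^ 3))"
proof (intro conjI allI impI)
  note pr = assms(1) and od = assms(2) and a0 = assms(3) and bl = assms(5)
  show "increment_conclusion p \<alpha> \<beta> (\<alpha> ^ 3 + (\<alpha> ^ 3 - \<beta>) / 2)"
  proof (rule incr_generic[OF pr od])
    show "\<alpha> ^ 3 < \<alpha> ^ 3 + (\<alpha> ^ 3 - \<beta>) / 2" using bl by simp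
    fix \<delta> :: real assume dp: "\<delta> > 0"
    show "\<exists>\<epsilon>>0. \<forall>n::nat. \<forall>g :: (nat \<Rightarrow> nat) \<Rightarrow> real. n \<ge> 1 \<longrightarrow>
       AP3 p n g \<le> \<beta> + \<epsilon> \<longrightarrow>
       3 * \<alpha>^3 \<le> 2 * avg (Fpn p n) (\<lambda>x. (g x)^3) + AP3 p n g \<longrightarrow>
       (\<alpha> > 0 \<longrightarrow> \<alpha>^3 \<le> 16 * avg (Fpn p n) (\<lambda>x. (g x)^3) * (real (card {x\<in>Fpn p n. \<alpha> / 2 \<le> g x}) / real p ^ n)\<^sup>2) \<longrightarrow>
       (\<alpha> / 2)^3 * real (card {(a, d) \<in> Fpn p n \<times> Fpn p n. a \<in> {x\<in>Fpn p n. \<alpha> / 2 \<le> g x} \<and> vadd p n a d \<in> {x\<in>Fpn p n. \<alpha> / 2 \<le> g x} \<and> vadd p n (vadd p n a d) d \<in> {x\<in>Fpn p n. \<alpha> / 2 \<le> g x}}) / (real p ^ n)\<^sup>2 \<le> AP3 p n g \<longrightarrow>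
       avg (Fpn p n) (\<lambda>x. (g x)^3) - 2 * \<epsilon> \<ge> \<alpha> ^ 3 + (\<alpha> ^ 3 - \<beta>) / 2 - \<delta>"
    proof (intro exI[of _ "\<delta>/4"] conjI allI impI)
      show "\<delta>/4 > 0" using dp by simp
      fix n :: nat and g :: "(nat \<Rightarrow> nat) \<Rightarrow> real"
      assume h1: "AP3 p n g \<le> \<beta> + \<delta>/4" and h2: "3 * \<alpha>^3 \<le> 2 * avg (Fpn p n) (\<lambda>x. (g x)^3) + AP3 p n g"
      have "2 * avg (Fpn p n) (\<lambda>x. (g x)^3) \<ge> 3 * \<alpha>^3 - \<beta> - \<delta>/4" using h1 h2 by linarith
      then show "avg (Fpn p n) (\<lambda>x. (g x)^3) - 2 * (\<delta>/4) \<ge> \<alpha> ^ 3 + (\<alpha> ^ 3 - \<beta>) / 2 - \<delta>"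
        using dp by (simp add: field_simps)
    qed
  qed
next
  fix C :: real
  note pr = assms(1) and od = assms(2) and a0 = assms(3) and bl = assms(5)
  assume hC: "AP_constant p C \<and> 0 < \<beta> \<and> 2 powr (8 + 8 * C) * \<beta> < \<alpha> ^ 3"
  then have APC: "AP_constant p C" and b0: "\<beta> > 0" and big: "2 powr (8 + 8 * C) * \<beta> < \<alpha> ^ 3" by auto
  have C1: "C \<ge> 1" using APC unfolding AP_constant_def by simp
  have a3: "\<alpha>^3 > 0" using a0 by simp
  show "increment_conclusion p \<alpha> \<beta> ((\<alpha> ^ 3 / \<beta>) powr (1 / (2 * C)) * \<alpha> ^ 3)"
  proof (rule incr_generic[OF pr od])
    have "\<alpha>^3 / \<beta> > 1" using bl b0 by simp
    then have "(\<alpha> ^ 3 / \<beta>) powr (1 / (2 * C)) > 1" using C1 by (intro gr_one_powr) auto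
    then show "\<alpha> ^ 3 < (\<alpha> ^ 3 / \<beta>) powr (1 / (2 * C)) * \<alpha> ^ 3" using a3 by simp
    fix \<delta> :: real assume dp: "\<delta> > 0"
    define \<epsilon> where "\<epsilon> = min (\<delta>/4) \<beta>"
    have ep: "\<epsilon> > 0" using dp b0 by (simp add: \<epsilon>_def)
    show "\<exists>\<epsilon>>0. \<forall>n::nat. \<forall>g :: (nat \<Rightarrow> nat) \<Rightarrow> real. n \<ge> 1 \<longrightarrow>
       AP3 p n g \<le> \<beta> + \<epsilon> \<longrightarrow>
       3 * \<alpha>^3 \<le> 2 * avg (Fpn p n) (\<lambda>x. (g x)^3) + AP3 p n g \<longrightarrow>
       (\<alpha> > 0 \<longrightarrow> \<alpha>^3 \<le> 16 * avg (Fpn p n) (\<lambda>x. (g x)^3) * (real (card {x\<in>Fpn p n. \<alpha> / 2 \<le> g x}) / real p ^ n)\<^sup>2) \<longrightarrow>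
       (\<alpha> / 2)^3 * real (card {(a, d) \<in> Fpn p n \<times> Fpn p n. a \<in> {x\<in>Fpn p n. \<alpha> / 2 \<le> g x} \<and> vadd p n a d \<in> {x\<in>Fpn p n. \<alpha> / 2 \<le> g x} \<and> vadd p n (vadd p n a d) d \<in> {x\<in>Fpn p n. \<alpha> / 2 \<le> g x}}) / (real p ^ n)\<^sup>2 \<le> AP3 p n g \<longrightarrow>
       avg (Fpn p n) (\<lambda>x. (g x)^3) - 2 * \<epsilon> \<ge> (\<alpha> ^ 3 / \<beta>) powr (1 / (2 * C)) * \<alpha> ^ 3 - \<delta>"
    proof (intro exI[of _ \<epsilon>] conjI ep allI impI)
      fix n :: nat and g :: "(nat \<Rightarrow> nat) \<Rightarrow> real"
      assume n1: "n \<ge> 1" and h1: "AP3 p n g \<le> \<beta> + \<epsilon>"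
        and h3: "\<alpha> > 0 \<longrightarrow> \<alpha>^3 \<le> 16 * avg (Fpn p n) (\<lambda>x. (g x)^3) * (real (card {x\<in>Fpn p n. \<alpha> / 2 \<le> g x}) / real p ^ n)\<^sup>2"
        and h4: "(\<alpha> / 2)^3 * real (card {(a, d) \<in> Fpn p n \<times> Fpn p n. a \<in> {x\<in>Fpn p n. \<alpha> / 2 \<le> g x} \<and> vadd p n a d \<in> {x\<in>Fpn p n. \<alpha> / 2 \<le> g x} \<and> vadd p n (vadd p n a d) d \<in> {x\<in>Fpn p n. \<alpha> / 2 \<le> g x}}) / (real p ^ n)\<^sup>2 \<le> AP3 p n g"
      define X where "X = {x\<in>Fpn p n. \<alpha> / 2 \<le> g x}"
      define Pc where "Pc = real (card {(a, d) \<in> Fpn p n \<times> Fpn p n. a \<in> X \<and> vadd p n a d \<in> X \<and> vadd p n (vadd p n a d) d \<in> X})"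
      define mu where "mu = real (card X) / real p ^ n"
      define M where "M = avg (Fpn p n) (\<lambda>x. (g x)^3)"
      define N where "N = real p ^ n"
      have Np: "N > 0" using pr prime_gt_0_nat N_def by simp
      have XS: "X \<subseteq> Fpn p n" unfolding X_def by auto
      have apc: "Pc \<ge> mu powr C * real p ^ (2 * n)"
        using APC n1 XS unfolding AP_constant_def Pc_def mu_def by blast
      have pow2: "real p ^ (2 * n) = N\<^sup>2" unfolding N_def by (simp add: power_mult mult.commute power2_eq_square power_mult_distrib)
      have "(\<alpha>/2)^3 * Pc / N\<^sup>2 \<le> \<beta> + \<epsilon>" using h4 h1 unfolding Pc_def X_def N_def by linarith
      also have "\<beta> + \<epsilon> \<le> 2 * \<beta>" unfolding \<epsilon>_def by simp
      finally have "(\<alpha>/2)^3 * Pc \<le> 2 * \<beta> * N\<^sup>2" using Np by (simp add: divide_le_eq)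
      moreover have "(\<alpha>/2)^3 * (mu powr C * N\<^sup>2) \<le> (\<alpha>/2)^3 * Pc" using apc pow2 a0 by (intro mult_left_mono) auto
      ultimately have "(\<alpha>/2)^3 * mu powr C * N\<^sup>2 \<le> 2 * \<beta> * N\<^sup>2" by (simp add: mult_ac)
      then have "(\<alpha>/2)^3 * mu powr C \<le> 2 * \<beta>" using Np by simp
      then have cnt: "\<alpha>^3 * mu powr C \<le> 16 * \<beta>" by (simp add: power_divide field_simps)
      have lev: "\<alpha>^3 \<le> 16 * M * mu\<^sup>2" using h3 a0 unfolding M_def mu_def X_def by simp
      have "(\<alpha> ^ 3 / \<beta>) powr (1 / (2 * C)) * \<alpha> ^ 3 \<le> M"
        by (rule final_real[OF a3 b0 C1 _ lev cnt]) (use big in \<open>simp_all add: mu_def\<close>)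
      then show "avg (Fpn p n) (\<lambda>x. (g x)^3) - 2 * \<epsilon> \<ge> (\<alpha> ^ 3 / \<beta>) powr (1 / (2 * C)) * \<alpha> ^ 3 - \<delta>"
        unfolding M_def \<epsilon>_def using dp by linarith
    qed
  qed
qed


end
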